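(* Let $N\ge 1$, $0<s\le 1$ and $1<p<\infty$ be such that $s\,p>N$. For every $\varphi\in \mathcal{W}^{s,p}(\mathbb{R}^N)$ there exist two distinct points $x_0,y_0\in \mathbb{R}^N$ such that \[ [\varphi]_{C^{0,\alpha_{s,p}}(\mathbb{R}^N)}=\frac{|\varphi(x_0)-\varphi(y_0)|}{|x_0-y_0|^{\alpha_{s,p}}}. \]
   Context: For $0<s<1$, $[\varphi]_{W^{s,p}(\mathbb{R}^N)}=\left(\iint_{\mathbb{R}^N\times\mathbb{R}^N}\frac{|\varphi(x)-\varphi(y)|^p}{|x-y|^{N+s\,p}}dx\,dy\right)^{1/p}$; for $s=1$, $[\varphi]_{W^{1,p}(\mathbb{R}^N)}=\|\nabla\varphi\|_{L^p(\mathbb{R}^N)}$. $[\varphi]_{C^{0,\alpha}(\mathbb{R}^N)}=\sup_{x\ne y}\frac{|\varphi(x)-\varphi(y)|}{|x-y|^\alpha}$; $\alpha_{s,p}=s-N/p$. $\mathcal{W}^{s,p}(\mathbb{R}^N)$ is the set of continuous functions $\varphi$ with $[\varphi]_{C^{0,\alpha_{s,p}}(\mathbb{R}^N)}<\infty$ and $[\varphi]_{W^{s,p}(\mathbb{R}^N)}<\infty$. *)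

theory Defs
  imports "HOL-Analysis.Analysis"
begin

definition smooth_fun :: "('a::euclidean_space \<Rightarrow> real) \<Rightarrow> bool" where
  "smooth_fun f \<longleftrightarrow> (\<exists>F. f \<in> F \<and>
     (\<forall>g\<in>F. g differentiable_on UNIV \<and>
        (\<forall>i\<in>Basis. (\<lambda>x. frechet_derivative g (at x) i) \<in> F)))"

definition test_fun :: "('a::euclidean_space \<Rightarrow> real) \<Rightarrow> bool" where
  "test_fun \<psi> \<longleftrightarrow> smooth_fun \<psi> \<and> compact (closure {x. \<psi> x \<noteq> 0})"

definition weak_gradient :: "('a::euclidean_space \<Rightarrow> real) \<Rightarrow> ('a \<Rightarrow> 'a) \<Rightarrow> bool" where
  "weak_gradient \<phi> g \<longleftrightarrow> g \<in> borel_measurable lborel \<and>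
     (\<forall>i\<in>Basis. \<forall>K. compact K \<longrightarrow> set_integrable lborel K (\<lambda>x. g x \<bullet> i)) \<and>
     (\<forall>\<psi>. test_fun \<psi> \<longrightarrow> (\<forall>i\<in>Basis.
        (\<integral>x. \<phi> x * frechet_derivative \<psi> (at x) i \<partial>lborel) =
          - (\<integral>x. (g x \<bullet> i) * \<psi> x \<partial>lborel)))"

text \<open>Finiteness of the seminorm [phi]_{W^{s,p}}: Gagliardo double integral for 0<s<1,
  L^p norm of the (weak) gradient for s = 1.\<close>
definition Wsp_seminorm_finite ::
    "real \<Rightarrow> real \<Rightarrow> ('a::euclidean_space \<Rightarrow> real) \<Rightarrow> bool" where
  "Wsp_seminorm_finite s p \<phi> \<longleftrightarrow>
     (if s < 1 then
        (\<integral>\<^sup>+ x. \<integral>\<^sup>+ y. ennreal (\<bar>\<phi> x - \<phi> y\<bar> powr p / norm (x - y) powr (real DIM('a) + s * p))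
            \<partial>lborel \<partial>lborel) < \<infinity>
      else
        (\<exists>g. weak_gradient \<phi> g \<and> (\<integral>\<^sup>+ x. ennreal (norm (g x) powr p) \<partial>lborel) < \<infinity>))"

definition holder_quot :: "real \<Rightarrow> ('a::euclidean_space \<Rightarrow> real) \<Rightarrow> 'a \<Rightarrow> 'a \<Rightarrow> real" where
  "holder_quot \<alpha> \<phi> x y = \<bar>\<phi> x - \<phi> y\<bar> / norm (x - y) powr \<alpha>"

definition holder_seminorm :: "real \<Rightarrow> ('a::euclidean_space \<Rightarrow> real) \<Rightarrow> real" where
  "holder_seminorm \<alpha> \<phi> = (SUP xy\<in>{(x, y). x \<noteq> y}. holder_quot \<alpha> \<phi> (fst xy) (snd xy))"

definition holder_finite :: "real \<Rightarrow> ('a::euclidean_space \<Rightarrow> real) \<Rightarrow> bool" where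
  "holder_finite \<alpha> \<phi> \<longleftrightarrow> bdd_above ((\<lambda>xy. holder_quot \<alpha> \<phi> (fst xy) (snd xy)) ` {(x, y). x \<noteq> y})"

definition alpha_sp :: "real \<Rightarrow> real \<Rightarrow> 'a::euclidean_space itself \<Rightarrow> real" where
  "alpha_sp s p _ = s - real DIM('a) / p"

definition calW :: "real \<Rightarrow> real \<Rightarrow> ('a::euclidean_space \<Rightarrow> real) set" where
  "calW s p = {\<phi>. continuous_on UNIV \<phi> \<and> holder_finite (alpha_sp s p TYPE('a)) \<phi>
                 \<and> Wsp_seminorm_finite s p \<phi>}"

end

theory Submission
  imports Defs "HOL-Computational_Algebra.Polynomial"
begin

definition nsmooth :: "nat \<Rightarrow> (real \<Rightarrow> real) \<Rightarrow> bool" where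
  "nsmooth n f \<longleftrightarrow> (\<forall>m\<le>n. \<forall>x. (deriv ^^ m) f differentiable (at x))"

definition smooth1 :: "(real \<Rightarrow> real) \<Rightarrow> bool" where
  "smooth1 f \<longleftrightarrow> (\<forall>n. nsmooth n f)"

lemma nsmooth_0: "nsmooth 0 f \<longleftrightarrow> (\<forall>x. f differentiable (at x))"
  by (simp add: nsmooth_def)

lemma nsmooth_Suc: "nsmooth (Suc n) f \<longleftrightarrow> (\<forall>x. f differentiable (at x)) \<and> nsmooth n (deriv f)"
proof
  assume a: "nsmooth (Suc n) f"
  show "(\<forall>x. f differentiable (at x)) \<and> nsmooth n (deriv f)"
  proof
    show "\<forall>x. f differentiable (at x)" using a[unfolded nsmooth_def, rule_format, of 0] by simp
    show "nsmooth n (deriv f)" unfolding nsmooth_def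
    proof (intro allI impI)
      fix m x assume "m \<le> n"
      then have "(deriv ^^ Suc m) f differentiable (at x)" using a unfolding nsmooth_def by auto
      then show "(deriv ^^ m) (deriv f) differentiable (at x)" by (simp add: funpow_Suc_right del: funpow.simps)
    qed
  qed
next
  assume a: "(\<forall>x. f differentiable (at x)) \<and> nsmooth n (deriv f)"
  show "nsmooth (Suc n) f" unfolding nsmooth_def
  proof (intro allI impI)
    fix m x assume m: "m \<le> Suc n"
    show "(deriv ^^ m) f differentiable (at x)"
    proof (cases m)
      case 0 then show ?thesis using a by simp
    next
      case (Suc k)
      then have "(deriv ^^ k) (deriv f) differentiable (at x)" using a m unfolding nsmooth_def by auto
      then show ?thesis using Suc by (simp add: funpow_Suc_right del: funpow.simps)
    qed
  qed
qed

lemma dderiv: "f differentiable (at x) \<Longrightarrow> (f has_real_derivative deriv f x) (at x)"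
  using DERIV_deriv_iff_real_differentiable by blast

lemma nsmooth_mono: "nsmooth n f \<Longrightarrow> m \<le> n \<Longrightarrow> nsmooth m f"
  by (auto simp: nsmooth_def)

lemma deriv_eqI: "(\<And>x. (f has_real_derivative f' x) (at x)) \<Longrightarrow> deriv f = f'"
  by (rule ext) (simp add: DERIV_imp_deriv)

lemma nsmooth_add: "nsmooth n u \<Longrightarrow> nsmooth n v \<Longrightarrow> nsmooth n (\<lambda>t. u t + v t)"
proof (induction n arbitrary: u v)
  case 0 then show ?case by (auto simp: nsmooth_0)
next
  case (Suc n)
  have du: "\<And>x. u differentiable (at x)" and dv: "\<And>x. v differentiable (at x)"
    using Suc.prems by (auto simp: nsmooth_Suc)
  have "deriv (\<lambda>t. u t + v t) = (\<lambda>t. deriv u t + deriv v t)"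
    by (rule deriv_eqI) (intro DERIV_add dderiv du dv)
  moreover have "nsmooth n (\<lambda>t. deriv u t + deriv v t)"
    using Suc.prems by (intro Suc.IH) (simp_all add: nsmooth_Suc)
  moreover have "\<And>x. (\<lambda>t. u t + v t) differentiable (at x)"
    using du dv by (simp add: differentiable_add)
  ultimately show ?case unfolding nsmooth_Suc by simp
qed

lemma nsmooth_cmult: "nsmooth n u \<Longrightarrow> nsmooth n (\<lambda>t. k * u t)"
proof (induction n arbitrary: u)
  case 0 then show ?case by (auto simp: nsmooth_0)
next
  case (Suc n)
  have du: "\<And>x. u differentiable (at x)"
    using Suc.prems by (auto simp: nsmooth_Suc)
  have "deriv (\<lambda>t. k * u t) = (\<lambda>t. k * deriv u t)"
    by (rule deriv_eqI) (intro DERIV_cmult dderiv du)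
  moreover have "nsmooth n (\<lambda>t. k * deriv u t)"
    using Suc.prems by (intro Suc.IH) (simp_all add: nsmooth_Suc)
  moreover have "\<And>x. (\<lambda>t. k * u t) differentiable (at x)"
    using du by (simp add: differentiable_mult)
  ultimately show ?case unfolding nsmooth_Suc by simp
qed

lemma nsmooth_mult: "nsmooth n u \<Longrightarrow> nsmooth n v \<Longrightarrow> nsmooth n (\<lambda>t. u t * v t)"
proof (induction n arbitrary: u v)
  case 0 then show ?case by (auto simp: nsmooth_0)
next
  case (Suc n)
  have du: "\<And>x. u differentiable (at x)" and dv: "\<And>x. v differentiable (at x)"
    and du': "nsmooth n (deriv u)" and dv': "nsmooth n (deriv v)"
    using Suc.prems by (auto simp: nsmooth_Suc)
  have un: "nsmooth n u" and vn: "nsmooth n v"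
    using Suc.prems nsmooth_mono le_SucI by blast+
  have e: "deriv (\<lambda>t. u t * v t) = (\<lambda>t. deriv u t * v t + u t * deriv v t)"
    by (rule deriv_eqI) (metis (no_types) DERIV_mult[OF dderiv[OF du] dderiv[OF dv]] mult.commute add.commute)
  have 1: "nsmooth n (\<lambda>t. deriv u t * v t)" by (rule Suc.IH[OF du' vn])
  have 2: "nsmooth n (\<lambda>t. u t * deriv v t)" by (rule Suc.IH[OF un dv'])
  have 3: "\<And>x. (\<lambda>t. u t * v t) differentiable (at x)"
    using du dv by (simp add: differentiable_mult)
  show ?case unfolding nsmooth_Suc e using 3 nsmooth_add[OF 1 2] by blast
qed

lemma nsmooth_affine: "nsmooth n u \<Longrightarrow> nsmooth n (\<lambda>t. u (c * t + d))"
proof (induction n arbitrary: u)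
  case 0
  have "(\<lambda>t. u (c * t + d)) differentiable (at x)" for x
  proof -
    have "u differentiable (at (c*x+d))" using 0 by (simp add: nsmooth_0)
    then have "(u has_real_derivative deriv u (c*x+d)) (at (c*x+d))"
      using DERIV_deriv_iff_real_differentiable by blast
    moreover have "((\<lambda>t. c * t + d) has_real_derivative c) (at x)"
      by (auto intro!: derivative_eq_intros)
    ultimately have "((\<lambda>t. u (c * t + d)) has_real_derivative (deriv u (c*x+d) * c)) (at x)"
      using DERIV_chain2[of u "deriv u (c*x+d)" "\<lambda>t. c*t+d" x c UNIV] by simp
    then show ?thesis using real_differentiable_def by blast
  qed
  then show ?case by (simp add: nsmooth_0)
next
  case (Suc n)
  have du: "\<And>x. u differentiable (at x)" and du': "nsmooth n (deriv u)"
    using Suc.prems by (auto simp: nsmooth_Suc)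
  have d: "((\<lambda>t. u (c * t + d)) has_real_derivative (deriv u (c*x+d) * c)) (at x)" for x
  proof -
    have "(u has_real_derivative deriv u (c*x+d)) (at (c*x+d))"
      using du DERIV_deriv_iff_real_differentiable by blast
    moreover have "((\<lambda>t. c * t + d) has_real_derivative c) (at x)"
      by (auto intro!: derivative_eq_intros)
    ultimately show ?thesis using DERIV_chain2[of u "deriv u (c*x+d)" "\<lambda>t. c*t+d" x c UNIV] by simp
  qed
  then have e: "deriv (\<lambda>t. u (c * t + d)) = (\<lambda>t. c * deriv u (c*t+d))"
    by (subst deriv_eqI) (auto simp: mult.commute)
  have 3: "\<And>x. (\<lambda>t. u (c * t + d)) differentiable (at x)"
    using d real_differentiable_def by blast
  show ?case unfolding nsmooth_Suc e using 3 nsmooth_cmult[OF Suc.IH[OF du']] by blast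
qed

lemma smooth1_add: "smooth1 u \<Longrightarrow> smooth1 v \<Longrightarrow> smooth1 (\<lambda>t. u t + v t)"
  and smooth1_cmult: "smooth1 u \<Longrightarrow> smooth1 (\<lambda>t. k * u t)"
  and smooth1_mult: "smooth1 u \<Longrightarrow> smooth1 v \<Longrightarrow> smooth1 (\<lambda>t. u t * v t)"
  and smooth1_affine: "smooth1 u \<Longrightarrow> smooth1 (\<lambda>t. u (c * t + d))"
  by (auto simp: smooth1_def nsmooth_add nsmooth_cmult nsmooth_mult nsmooth_affine)

lemma smooth1_diff: "smooth1 u \<Longrightarrow> smooth1 v \<Longrightarrow> smooth1 (\<lambda>t. u t - v t)"
  using smooth1_add[of u "\<lambda>t. (-1) * v t"] smooth1_cmult[of v "-1"] by simp

lemma smooth1_deriv: "smooth1 u \<Longrightarrow> smooth1 (deriv u)"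
  unfolding smooth1_def by (meson nsmooth_Suc)

lemma smooth1_differentiable: "smooth1 u \<Longrightarrow> u differentiable (at x)"
  unfolding smooth1_def by (meson nsmooth_0)

lemma smooth1_derivI: "(\<And>x. (f has_real_derivative f' x) (at x)) \<Longrightarrow> smooth1 f' \<Longrightarrow> smooth1 f"
  unfolding smooth1_def
proof
  fix n assume d: "\<And>x. (f has_real_derivative f' x) (at x)" and s: "\<forall>n. nsmooth n f'"
  have "deriv f = f'" by (rule deriv_eqI) (rule d)
  moreover have "\<And>x. f differentiable (at x)" using d real_differentiable_def by blast
  ultimately have "nsmooth (Suc n) f" using s by (simp add: nsmooth_Suc)
  then show "nsmooth n f" by (rule nsmooth_mono) simp
qed

lemma smooth1_const: "smooth1 (\<lambda>t. k)"
proof -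
  have d: "deriv (\<lambda>t::real. k) = (\<lambda>t. 0)" by (rule deriv_eqI) simp
  have "nsmooth n (\<lambda>t. k)" for n
  proof (induction n arbitrary: k)
    case 0 then show ?case by (simp add: nsmooth_0)
  next
    case (Suc n)
    have "deriv (\<lambda>t::real. k) = (\<lambda>t. 0)" by (rule deriv_eqI) simp
    then show ?case using Suc[of 0] by (simp add: nsmooth_Suc)
  qed
  then show ?thesis by (simp add: smooth1_def)
qed


definition kfun :: "real poly \<Rightarrow> real \<Rightarrow> real" where
  "kfun P t = (if t > 0 then poly P (1/t) * exp (-1/t) else 0)"

definition knext :: "real poly \<Rightarrow> real poly" where
  "knext P = [:0,0,1:] * (P - pderiv P)"

lemma poly_exp_lim: "((\<lambda>u::real. u * poly P u / exp u) \<longlongrightarrow> 0) at_top"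
proof -
  have e: "(\<lambda>u::real. u * poly P u / exp u) = (\<lambda>u. \<Sum>i\<le>degree P. coeff P i * (u ^ Suc i / exp u))"
    by (rule ext) (simp add: poly_altdef sum_distrib_left sum_divide_distrib algebra_simps)
  have "((\<lambda>u::real. \<Sum>i\<le>degree P. coeff P i * (u ^ Suc i / exp u)) \<longlongrightarrow> (\<Sum>i\<le>degree P. coeff P i * 0)) at_top"
    by (intro tendsto_sum tendsto_mult tendsto_const tendsto_power_div_exp_0)
  then show ?thesis unfolding e by simp
qed

lemma kfun_deriv: "(kfun P has_real_derivative kfun (knext P) t) (at t)"
proof -
  consider "t > 0" | "t < 0" | "t = 0" by linarith
  then show ?thesis
  proof cases
    case 1
    let ?g = "\<lambda>t. poly P (1/t) * exp (-1/t)"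
    have "(?g has_real_derivative
       (poly (pderiv P) (1/t) * (- 1 / t^2)) * exp (-1/t) + poly P (1/t) * (exp (-1/t) * (1/t^2))) (at t)"
      using 1 by (auto intro!: derivative_eq_intros DERIV_chain2[OF poly_DERIV] simp: power2_eq_square)
    moreover have "(poly (pderiv P) (1/t) * (- 1 / t^2)) * exp (-1/t) + poly P (1/t) * (exp (-1/t) * (1/t^2))
        = kfun (knext P) t"
      using 1 by (simp add: kfun_def knext_def algebra_simps power2_eq_square divide_simps)
    ultimately have "(?g has_real_derivative kfun (knext P) t) (at t)" by simp
    then show ?thesis
      by (rule has_field_derivative_transform_within_open[of _ _ _ "{0<..}"]) (use 1 in \<open>auto simp: kfun_def\<close>)
  next
    case 2
    have "((\<lambda>_. 0) has_real_derivative 0) (at t)" by simp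
    then have "((\<lambda>_. 0) has_real_derivative kfun (knext P) t) (at t)" using 2 by (simp add: kfun_def)
    then show ?thesis
      by (rule has_field_derivative_transform_within_open[of _ _ _ "{..<0}"]) (use 2 in \<open>auto simp: kfun_def\<close>)
  next
    case 3
    have L: "((\<lambda>y. kfun P y / y) \<longlongrightarrow> 0) (at_left 0)"
    proof -
      have "\<forall>\<^sub>F y in at_left (0::real). 0 = kfun P y / y"
        unfolding eventually_at_left_field by (rule exI[of _ "-1"]) (auto simp: kfun_def)
      then show ?thesis by (rule Lim_transform_eventually[OF tendsto_const])
    qed
    have R: "((\<lambda>y. kfun P y / y) \<longlongrightarrow> 0) (at_right 0)"
    proof -
      have "((\<lambda>y. inverse y * poly P (inverse y) / exp (inverse y)) \<longlongrightarrow> 0) (at_right (0::real))"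
        using filterlim_compose[OF poly_exp_lim filterlim_inverse_at_top_right] by simp
      moreover have "\<forall>\<^sub>F y in at_right (0::real). inverse y * poly P (inverse y) / exp (inverse y) = kfun P y / y"
        using eventually_at_right_less[of "0::real"]
        by eventually_elim (simp add: kfun_def exp_minus divide_simps)
      ultimately show ?thesis by (rule Lim_transform_eventually)
    qed
    have "((\<lambda>y. (kfun P y - kfun P 0) / (y - 0)) \<longlongrightarrow> 0) (at 0)"
      using filterlim_split_at[OF L R] by (simp add: kfun_def)
    then show ?thesis using 3 by (simp add: has_field_derivative_iff kfun_def)
  qed
qed

lemma smooth1_kfun: "smooth1 (kfun P)"
proof -
  have "nsmooth n (kfun P)" for n
  proof (induction n arbitrary: P)
    case 0 then show ?case using kfun_deriv real_differentiable_def by (auto simp: nsmooth_0)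
  next
    case (Suc n)
    have "deriv (kfun P) = kfun (knext P)" by (rule deriv_eqI) (rule kfun_deriv)
    then show ?case using Suc kfun_deriv real_differentiable_def by (auto simp: nsmooth_Suc)
  qed
  then show ?thesis by (simp add: smooth1_def)
qed

definition bump :: "real \<Rightarrow> real" where
  "bump t = kfun 1 (1 + t) * kfun 1 (1 - t)"

lemma smooth1_bump: "smooth1 bump"
proof -
  have "smooth1 (\<lambda>t. kfun 1 (1 * t + 1))" "smooth1 (\<lambda>t. kfun 1 ((-1) * t + 1))"
    by (intro smooth1_affine smooth1_kfun)+
  then have "smooth1 (\<lambda>t. kfun 1 (1 * t + 1) * kfun 1 ((-1) * t + 1))" by (rule smooth1_mult)
  then show ?thesis unfolding bump_def by (simp add: add.commute)
qed

lemma bump_nonneg: "bump t \<ge> 0"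
  by (simp add: bump_def kfun_def)

lemma bump_le1: "bump t \<le> 1"
proof -
  have "kfun 1 s \<le> 1" "kfun 1 s \<ge> 0" for s by (auto simp: kfun_def)
  then show ?thesis unfolding bump_def by (simp add: mult_le_one)
qed

lemma bump_zero: "\<bar>t\<bar> \<ge> 1 \<Longrightarrow> bump t = 0"
  by (auto simp: bump_def kfun_def)

lemma bump_pos: "\<bar>t\<bar> \<le> 1/2 \<Longrightarrow> bump t \<ge> exp (-2) * exp (-2)"
proof -
  assume t: "\<bar>t\<bar> \<le> 1/2"
  have "kfun 1 s \<ge> exp (-2)" if "s \<ge> 1/2" for s
  proof -
    have "-1/s \<ge> -2" using that by (simp add: field_simps)
    then show ?thesis using that by (simp add: kfun_def)
  qed
  then have "kfun 1 (1+t) \<ge> exp (-2)" "kfun 1 (1-t) \<ge> exp (-2)" using t by auto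
  moreover have "0 \<le> kfun 1 (1+t)" by (simp add: kfun_def)
  ultimately show ?thesis unfolding bump_def by (intro mult_mono) auto
qed


definition prodfun :: "('a::euclidean_space \<Rightarrow> real \<Rightarrow> real) \<Rightarrow> 'a \<Rightarrow> real" where
  "prodfun f z = (\<Prod>j\<in>Basis. f j (z \<bullet> j))"

lemma comp_inner_has_derivative:
  assumes "f differentiable (at (z \<bullet> k))"
  shows "((\<lambda>z. f (z \<bullet> k)) has_derivative (\<lambda>h. deriv f (z \<bullet> k) * (h \<bullet> k))) (at z)"
proof -
  have "((\<lambda>z. z \<bullet> k) has_derivative (\<lambda>h. h \<bullet> k)) (at z)"
    by (auto intro!: derivative_eq_intros)
  moreover have "(f has_derivative (\<lambda>x. deriv f (z \<bullet> k) * x)) (at (z \<bullet> k))"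
    using dderiv[OF assms] unfolding has_field_derivative_def by simp
  ultimately have "((\<lambda>x. f x) \<circ> (\<lambda>z. z \<bullet> k) has_derivative (\<lambda>x. deriv f (z \<bullet> k) * x) \<circ> (\<lambda>h. h \<bullet> k)) (at z)"
    by (rule diff_chain_at)
  then show ?thesis by (simp add: o_def)
qed

lemma prodfun_has_derivative:
  fixes f :: "'a::euclidean_space \<Rightarrow> real \<Rightarrow> real"
  assumes "\<And>j. j \<in> Basis \<Longrightarrow> smooth1 (f j)"
  shows "(prodfun f has_derivative (\<lambda>h. \<Sum>k\<in>Basis. deriv (f k) (z \<bullet> k) * (h \<bullet> k) * (\<Prod>j\<in>Basis - {k}. f j (z \<bullet> j)))) (at z)"
  unfolding prodfun_def
  by (rule has_derivative_prod) (rule comp_inner_has_derivative[OF smooth1_differentiable[OF assms]])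

lemma prodfun_partial:
  fixes f :: "'a::euclidean_space \<Rightarrow> real \<Rightarrow> real"
  assumes "\<And>j. j \<in> Basis \<Longrightarrow> smooth1 (f j)" and i: "i \<in> Basis"
  shows "frechet_derivative (prodfun f) (at z) i = deriv (f i) (z \<bullet> i) * (\<Prod>j\<in>Basis - {i}. f j (z \<bullet> j))"
proof -
  have "frechet_derivative (prodfun f) (at z) = (\<lambda>h. \<Sum>k\<in>Basis. deriv (f k) (z \<bullet> k) * (h \<bullet> k) * (\<Prod>j\<in>Basis - {k}. f j (z \<bullet> j)))"
    using frechet_derivative_at[OF prodfun_has_derivative[of f, OF assms(1)]] by simp
  then have "frechet_derivative (prodfun f) (at z) i = (\<Sum>k\<in>Basis. deriv (f k) (z \<bullet> k) * (i \<bullet> k) * (\<Prod>j\<in>Basis - {k}. f j (z \<bullet> j)))"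
    by simp
  also have "\<dots> = (\<Sum>k\<in>Basis. if k = i then deriv (f k) (z \<bullet> k) * (\<Prod>j\<in>Basis - {k}. f j (z \<bullet> j)) else 0)"
    by (intro sum.cong refl) (use i in \<open>auto simp: inner_Basis\<close>)
  also have "\<dots> = deriv (f i) (z \<bullet> i) * (\<Prod>j\<in>Basis - {i}. f j (z \<bullet> j))"
    using i by (simp add: sum.delta')
  finally show ?thesis .
qed

lemma prodfun_upd:
  fixes f :: "'a::euclidean_space \<Rightarrow> real \<Rightarrow> real"
  assumes i: "i \<in> Basis"
  shows "prodfun (f(i := h)) z = h (z \<bullet> i) * (\<Prod>j\<in>Basis - {i}. f j (z \<bullet> j))"
proof -
  have "prodfun (f(i := h)) z = (f(i := h)) i (z \<bullet> i) * (\<Prod>j\<in>Basis - {i}. (f(i := h)) j (z \<bullet> j))"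
    unfolding prodfun_def using i by (simp add: prod.remove)
  also have "(\<Prod>j\<in>Basis - {i}. (f(i := h)) j (z \<bullet> j)) = (\<Prod>j\<in>Basis - {i}. f j (z \<bullet> j))"
    by (intro prod.cong) auto
  finally show ?thesis by (simp only: fun_upd_same)
qed

lemma smooth_prodfun:
  fixes f :: "'a::euclidean_space \<Rightarrow> real \<Rightarrow> real"
  assumes "\<And>j. j \<in> Basis \<Longrightarrow> smooth1 (f j)"
  shows "smooth_fun (prodfun f)"
  unfolding smooth_fun_def
proof (intro exI conjI ballI)
  define F where "F = {prodfun f | f::'a \<Rightarrow> real \<Rightarrow> real. \<forall>j\<in>Basis. smooth1 (f j)}"
  show "prodfun f \<in> F" unfolding F_def using assms by blast
  fix g assume "g \<in> F"
  then obtain f' where g: "g = prodfun f'" and f': "\<And>j. j \<in> Basis \<Longrightarrow> smooth1 (f' j)" unfolding F_def by blast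
  show "g differentiable_on UNIV"
    unfolding g differentiable_on_def differentiable_def
    using prodfun_has_derivative[of f', OF f'] by blast
  fix i :: 'a assume i: "i \<in> Basis"
  have "(\<lambda>x. frechet_derivative g (at x) i) = prodfun (f'(i := deriv (f' i)))"
    by (rule ext) (simp add: g prodfun_partial[of f', OF f' i] prodfun_upd[OF i])
  moreover have "\<forall>j\<in>Basis. smooth1 ((f'(i := deriv (f' i))) j)"
    using f' smooth1_deriv by auto
  ultimately show "(\<lambda>x. frechet_derivative g (at x) i) \<in> F" unfolding F_def by blast
qed

lemma prodfun_support:
  fixes f :: "'a::euclidean_space \<Rightarrow> real \<Rightarrow> real"
  assumes "\<And>j t. j \<in> Basis \<Longrightarrow> f j t \<noteq> 0 \<Longrightarrow> \<bar>t\<bar> \<le> R"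
  shows "prodfun f z \<noteq> 0 \<Longrightarrow> norm z \<le> real DIM('a) * R"
proof -
  assume "prodfun f z \<noteq> 0"
  then have "\<And>j. j \<in> Basis \<Longrightarrow> f j (z \<bullet> j) \<noteq> 0" unfolding prodfun_def by auto
  then have "\<And>j. j \<in> Basis \<Longrightarrow> \<bar>z \<bullet> j\<bar> \<le> R" using assms by blast
  then have "(\<Sum>b\<in>Basis. \<bar>z \<bullet> b\<bar>) \<le> (\<Sum>b\<in>(Basis::'a set). R)" by (intro sum_mono) auto
  then show ?thesis using norm_le_l1[of z] by simp
qed

lemma test_prodfun:
  fixes f :: "'a::euclidean_space \<Rightarrow> real \<Rightarrow> real"
  assumes "\<And>j. j \<in> Basis \<Longrightarrow> smooth1 (f j)"
    and "\<And>j t. j \<in> Basis \<Longrightarrow> f j t \<noteq> 0 \<Longrightarrow> \<bar>t\<bar> \<le> R"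
  shows "test_fun (prodfun f)"
  unfolding test_fun_def
proof
  show "smooth_fun (prodfun f)" by (rule smooth_prodfun[of f, OF assms(1)])
  have "{x. prodfun f x \<noteq> 0} \<subseteq> cball 0 (real DIM('a) * R)"
    using prodfun_support[of f, OF assms(2)] by auto
  then have "bounded {x. prodfun f x \<noteq> 0}" using bounded_cball bounded_subset by blast
  then show "compact (closure {x. prodfun f x \<noteq> 0})" by simp
qed

lemma continuous_prodfun:
  fixes f :: "'a::euclidean_space \<Rightarrow> real \<Rightarrow> real"
  assumes "\<And>j. j \<in> Basis \<Longrightarrow> smooth1 (f j)"
  shows "continuous_on UNIV (prodfun f)"
proof -
  have "prodfun f differentiable (at z)" for z
    using prodfun_has_derivative[of f, OF assms] differentiable_def by blast
  then show ?thesis by (simp add: continuous_at_imp_continuous_on differentiable_imp_continuous_within)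
qed


definition chi :: "real \<Rightarrow> real \<Rightarrow> real" where "chi \<epsilon> t = bump (t / \<epsilon>)"
definition Xf :: "real \<Rightarrow> real \<Rightarrow> real" where "Xf \<epsilon> t = integral {-2*\<epsilon>..t} (chi \<epsilon>)"
definition Th :: "real \<Rightarrow> real \<Rightarrow> real \<Rightarrow> real" where "Th \<epsilon> a t = Xf \<epsilon> t - Xf \<epsilon> (t - a)"

lemma smooth1_chi_shift: "smooth1 (\<lambda>t. chi \<epsilon> (t - c))"
proof -
  have "smooth1 (\<lambda>t. bump ((1/\<epsilon>) * t + (- c/\<epsilon>)))" by (rule smooth1_affine[OF smooth1_bump])
  moreover have "(\<lambda>t. bump ((1/\<epsilon>) * t + (- c/\<epsilon>))) = (\<lambda>t. chi \<epsilon> (t - c))"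
    by (rule ext) (simp add: chi_def diff_divide_distrib)
  ultimately show ?thesis by simp
qed

lemma smooth1_chi: "smooth1 (chi \<epsilon>)"
  using smooth1_chi_shift[of \<epsilon> 0] by simp

lemma chi_nonneg: "chi \<epsilon> t \<ge> 0" by (simp add: chi_def bump_nonneg)
lemma chi_le1: "chi \<epsilon> t \<le> 1" by (simp add: chi_def bump_le1)
lemma chi_zero: "\<epsilon> > 0 \<Longrightarrow> \<bar>t\<bar> \<ge> \<epsilon> \<Longrightarrow> chi \<epsilon> t = 0"
  unfolding chi_def by (rule bump_zero) (simp add: abs_divide)
lemma chi_nz: "\<epsilon> > 0 \<Longrightarrow> chi \<epsilon> t \<noteq> 0 \<Longrightarrow> \<bar>t\<bar> < \<epsilon>"
  using chi_zero by force
lemma chi_pos: "\<epsilon> > 0 \<Longrightarrow> \<bar>t\<bar> \<le> \<epsilon>/2 \<Longrightarrow> chi \<epsilon> t \<ge> exp (-2) * exp (-2)"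
  unfolding chi_def by (rule bump_pos) (simp add: abs_divide field_simps)

lemma chi_cont: "continuous_on S (chi \<epsilon>)"
proof -
  have "\<And>x. chi \<epsilon> differentiable (at x)" using smooth1_differentiable[OF smooth1_chi] .
  then show ?thesis by (simp add: continuous_at_imp_continuous_on differentiable_imp_continuous_within)
qed

lemma Xf_deriv:
  assumes e: "\<epsilon> > 0"
  shows "(Xf \<epsilon> has_real_derivative chi \<epsilon> t) (at t)"
proof (cases "t > -2*\<epsilon>")
  case True
  have "((\<lambda>x. integral {-2*\<epsilon>..x} (chi \<epsilon>)) has_real_derivative chi \<epsilon> t) (at t within {-2*\<epsilon>..t+1})"
    by (rule integral_has_real_derivative) (use True chi_cont in auto)
  moreover have "at t within {-2*\<epsilon>..t+1} = at t"
    by (rule at_within_interior) (use True in simp)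
  ultimately show ?thesis unfolding Xf_def by simp
next
  case False
  then have t: "t < -\<epsilon>" using e by simp
  have z: "Xf \<epsilon> s = 0" if "s < -\<epsilon>" for s
  proof -
    have "(chi \<epsilon> has_integral 0) {-2*\<epsilon>..s}"
      by (rule has_integral_is_0) (use that e in \<open>auto intro!: chi_zero\<close>)
    then show ?thesis unfolding Xf_def by (rule integral_unique)
  qed
  have "((\<lambda>_. 0) has_real_derivative 0) (at t)" by simp
  moreover have "chi \<epsilon> t = 0" using t e by (intro chi_zero) auto
  ultimately have "((\<lambda>_. 0) has_real_derivative chi \<epsilon> t) (at t)" by simp
  then show ?thesis
    by (rule has_field_derivative_transform_within_open[of _ _ _ "{..<-\<epsilon>}"]) (use t z in auto)
qed

lemma Xf_cont: "\<epsilon> > 0 \<Longrightarrow> continuous_on S (Xf \<epsilon>)"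
  using Xf_deriv by (meson DERIV_isCont continuous_at_imp_continuous_on)

lemma Th_deriv:
  assumes e: "\<epsilon> > 0"
  shows "(Th \<epsilon> a has_real_derivative (chi \<epsilon> t - chi \<epsilon> (t - a))) (at t)"
proof -
  have "((\<lambda>t. Xf \<epsilon> (t - a)) has_real_derivative chi \<epsilon> (t - a) * 1) (at t)"
    by (rule DERIV_chain2[OF Xf_deriv[OF e]]) (auto intro!: derivative_eq_intros)
  then show ?thesis unfolding Th_def[abs_def] using Xf_deriv[OF e] by (auto intro!: derivative_eq_intros)
qed

lemma smooth1_Th: "\<epsilon> > 0 \<Longrightarrow> smooth1 (Th \<epsilon> a)"
  by (rule smooth1_derivI[OF Th_deriv]) (auto intro!: smooth1_diff smooth1_chi smooth1_chi_shift)

lemma smooth1_Th_shift: "\<epsilon> > 0 \<Longrightarrow> smooth1 (\<lambda>t. Th \<epsilon> a (t - c))"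
  using smooth1_affine[OF smooth1_Th, of \<epsilon> a 1 "-c"] by simp

lemma deriv_Th_shift: "\<epsilon> > 0 \<Longrightarrow> deriv (\<lambda>t. Th \<epsilon> a (t - c)) s = chi \<epsilon> (s - c) - chi \<epsilon> (s - c - a)"
proof -
  assume e: "\<epsilon> > 0"
  have "((\<lambda>t. Th \<epsilon> a (t - c)) has_real_derivative (chi \<epsilon> (s - c) - chi \<epsilon> (s - c - a)) * 1) (at s)"
    by (rule DERIV_chain2[OF Th_deriv[OF e]]) (auto intro!: derivative_eq_intros)
  then show ?thesis by (simp add: DERIV_imp_deriv)
qed

lemma Th_mvt:
  assumes e: "\<epsilon> > 0"
  shows "\<exists>\<xi>. \<bar>t - \<xi>\<bar> \<le> \<bar>a\<bar> \<and> Th \<epsilon> a t = a * chi \<epsilon> \<xi>"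
proof -
  consider "a = 0" | "a > 0" | "a < 0" by linarith
  then show ?thesis
  proof cases
    case 1 then show ?thesis by (auto simp: Th_def)
  next
    case 2
    obtain l z where z: "t - a < z" "z < t" "DERIV (Xf \<epsilon>) z :> l" "Xf \<epsilon> t - Xf \<epsilon> (t - a) = (t - (t - a)) * l"
      using MVT[of "t - a" t "Xf \<epsilon>"] 2 Xf_cont[OF e] Xf_deriv[OF e] real_differentiable_def by force
    have "l = chi \<epsilon> z" using DERIV_unique[OF z(3) Xf_deriv[OF e]] .
    then show ?thesis using z 2 by (intro exI[of _ z]) (auto simp: Th_def)
  next
    case 3
    obtain l z where z: "t < z" "z < t - a" "DERIV (Xf \<epsilon>) z :> l" "Xf \<epsilon> (t - a) - Xf \<epsilon> t = ((t - a) - t) * l"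
      using MVT[of t "t - a" "Xf \<epsilon>"] 3 Xf_cont[OF e] Xf_deriv[OF e] real_differentiable_def by force
    have "l = chi \<epsilon> z" using DERIV_unique[OF z(3) Xf_deriv[OF e]] .
    then show ?thesis using z 3 by (intro exI[of _ z]) (auto simp: Th_def algebra_simps)
  qed
qed

lemma Th_bound: "\<epsilon> > 0 \<Longrightarrow> \<bar>Th \<epsilon> a t\<bar> \<le> \<bar>a\<bar>"
proof -
  assume e: "\<epsilon> > 0"
  obtain \<xi> where "Th \<epsilon> a t = a * chi \<epsilon> \<xi>" using Th_mvt[OF e] by blast
  moreover have "\<bar>chi \<epsilon> \<xi>\<bar> \<le> 1" using chi_nonneg[of \<epsilon> \<xi>] chi_le1[of \<epsilon> \<xi>] by simp
  ultimately show ?thesis by (simp add: abs_mult mult_left_le)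
qed

lemma Th_support: "\<epsilon> > 0 \<Longrightarrow> Th \<epsilon> a t \<noteq> 0 \<Longrightarrow> \<bar>t\<bar> \<le> \<bar>a\<bar> + \<epsilon>"
proof -
  assume e: "\<epsilon> > 0" and nz: "Th \<epsilon> a t \<noteq> 0"
  obtain \<xi> where x: "\<bar>t - \<xi>\<bar> \<le> \<bar>a\<bar>" "Th \<epsilon> a t = a * chi \<epsilon> \<xi>" using Th_mvt[OF e] by blast
  then have "chi \<epsilon> \<xi> \<noteq> 0" using nz by auto
  then have "\<bar>\<xi>\<bar> < \<epsilon>" using chi_nz[OF e] by blast
  then show ?thesis using x(1) by linarith
qed


definition rho :: "real \<Rightarrow> 'a::euclidean_space \<Rightarrow> 'a \<Rightarrow> real" where
  "rho \<epsilon> u = prodfun (\<lambda>j t. chi \<epsilon> (t - u \<bullet> j))"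

definition psi :: "real \<Rightarrow> 'a::euclidean_space \<Rightarrow> 'a \<Rightarrow> real \<Rightarrow> 'a \<Rightarrow> real" where
  "psi \<epsilon> u i a = prodfun (\<lambda>j t. if j = i then Th \<epsilon> a (t - u \<bullet> i) else chi \<epsilon> (t - u \<bullet> j))"

lemma rho_eq: "rho \<epsilon> u z = (\<Prod>j\<in>Basis. chi \<epsilon> (z \<bullet> j - u \<bullet> j))"
  by (simp add: rho_def prodfun_def)

lemma rho_nonneg: "rho \<epsilon> u z \<ge> 0"
  unfolding rho_eq by (intro prod_nonneg) (simp add: chi_nonneg)

lemma rho_le1: "rho \<epsilon> u z \<le> 1"
  unfolding rho_eq by (intro prod_le_1) (simp add: chi_nonneg chi_le1)

lemma l1_bound:
  fixes w :: "'a::euclidean_space" and B :: "'a \<Rightarrow> real"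
  assumes "\<And>j. j \<in> Basis \<Longrightarrow> \<bar>w \<bullet> j\<bar> \<le> B j"
  shows "norm w \<le> (\<Sum>j\<in>Basis. B j)"
proof -
  have "(\<Sum>j\<in>Basis. \<bar>w \<bullet> j\<bar>) \<le> (\<Sum>j\<in>Basis. B j)" by (rule sum_mono) (rule assms)
  then show ?thesis using norm_le_l1[of w] by linarith
qed

lemma rho_support:
  fixes u :: "'a::euclidean_space"
  assumes e: "\<epsilon> > 0" and nz: "rho \<epsilon> u z \<noteq> 0"
  shows "norm (z - u) \<le> real DIM('a) * \<epsilon>"
proof -
  have "\<And>j. j \<in> Basis \<Longrightarrow> chi \<epsilon> (z \<bullet> j - u \<bullet> j) \<noteq> 0" using nz unfolding rho_eq by auto
  then have "\<And>j. j \<in> Basis \<Longrightarrow> \<bar>(z - u) \<bullet> j\<bar> \<le> \<epsilon>"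
    using chi_nz[OF e] by (fastforce simp: inner_diff_left)
  then have "norm (z - u) \<le> (\<Sum>j\<in>(Basis::'a set). \<epsilon>)" by (rule l1_bound)
  then show ?thesis by simp
qed

lemma rho_cont: "continuous_on UNIV (rho \<epsilon> u)"
  unfolding rho_def by (rule continuous_prodfun) (simp add: smooth1_chi_shift)

lemma psi_comp_smooth:
  fixes u :: "'a::euclidean_space"
  shows "\<epsilon> > 0 \<Longrightarrow> j \<in> Basis \<Longrightarrow> smooth1 ((\<lambda>j t. if j = i then Th \<epsilon> a (t - u \<bullet> i) else chi \<epsilon> (t - u \<bullet> j)) j)"
  by (cases "j = i") (simp_all add: smooth1_Th_shift smooth1_chi_shift)

lemma psi_cont: "\<epsilon> > 0 \<Longrightarrow> continuous_on UNIV (psi \<epsilon> u i a)"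
  unfolding psi_def by (rule continuous_prodfun) (rule psi_comp_smooth)

lemma psi_eq: "i \<in> Basis \<Longrightarrow> psi \<epsilon> u i a z = Th \<epsilon> a (z \<bullet> i - u \<bullet> i) * (\<Prod>j\<in>Basis - {i}. chi \<epsilon> (z \<bullet> j - u \<bullet> j))"
  unfolding psi_def prodfun_def by (simp add: prod.remove)

lemma psi_bound:
  fixes u :: "'a::euclidean_space"
  assumes e: "\<epsilon> > 0" and i: "i \<in> Basis"
  shows "\<bar>psi \<epsilon> u i a z\<bar> \<le> \<bar>a\<bar>"
proof -
  have P: "\<bar>\<Prod>j\<in>Basis - {i}. chi \<epsilon> (z \<bullet> j - u \<bullet> j)\<bar> \<le> 1"
    by (simp add: abs_prod prod_le_1 chi_nonneg chi_le1)
  show ?thesis unfolding psi_eq[OF i] abs_mult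
    using mult_mono[OF Th_bound[OF e] P abs_ge_zero abs_ge_zero] by simp
qed

lemma psi_support:
  fixes u :: "'a::euclidean_space"
  assumes e: "\<epsilon> > 0" and i: "i \<in> Basis" and nz: "psi \<epsilon> u i a z \<noteq> 0"
  shows "norm (z - u) \<le> \<bar>a\<bar> + real DIM('a) * \<epsilon>"
proof -
  have c: "\<And>j. j \<in> Basis \<Longrightarrow> j \<noteq> i \<Longrightarrow> chi \<epsilon> (z \<bullet> j - u \<bullet> j) \<noteq> 0"
    using nz unfolding psi_eq[OF i] by auto
  have t: "Th \<epsilon> a (z \<bullet> i - u \<bullet> i) \<noteq> 0" using nz unfolding psi_eq[OF i] by auto
  define B where "B = (\<lambda>j. if j = i then \<bar>a\<bar> + \<epsilon> else \<epsilon>)"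
  have "\<And>j::'a. j \<in> Basis \<Longrightarrow> \<bar>(z - u) \<bullet> j\<bar> \<le> B j"
  proof -
    fix j :: 'a assume j: "j \<in> Basis"
    show "\<bar>(z - u) \<bullet> j\<bar> \<le> B j"
    proof (cases "j = i")
      case True then show ?thesis using Th_support[OF e t] by (simp add: B_def inner_diff_left)
    next
      case False then show ?thesis using chi_nz[OF e c[OF j False]] by (simp add: B_def inner_diff_left)
    qed
  qed
  then have "norm (z - u) \<le> (\<Sum>j\<in>Basis. B j)" by (rule l1_bound)
  also have "(\<Sum>j\<in>Basis. B j) = \<bar>a\<bar> + real DIM('a) * \<epsilon>"
  proof -
    have "(\<Sum>j\<in>Basis. B j) = (\<Sum>j\<in>Basis. \<epsilon> + (if j = i then \<bar>a\<bar> else 0))"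
      by (intro sum.cong) (auto simp: B_def)
    also have "\<dots> = real DIM('a) * \<epsilon> + \<bar>a\<bar>" using i by (simp add: sum.distrib)
    finally show ?thesis by simp
  qed
  finally show ?thesis .
qed

lemma psi_test:
  fixes u :: "'a::euclidean_space"
  assumes e: "\<epsilon> > 0" and i: "i \<in> Basis"
  shows "test_fun (psi \<epsilon> u i a)"
  unfolding psi_def
proof (rule test_prodfun[where R = "\<bar>a\<bar> + \<epsilon> + norm u", OF psi_comp_smooth[OF e]])
  fix j :: 'a and t :: real assume j: "j \<in> Basis" and nz: "(if j = i then Th \<epsilon> a (t - u \<bullet> i) else chi \<epsilon> (t - u \<bullet> j)) \<noteq> 0"
  have uj: "\<bar>u \<bullet> j\<bar> \<le> norm u" using Basis_le_norm[OF j] .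
  show "\<bar>t\<bar> \<le> \<bar>a\<bar> + \<epsilon> + norm u"
  proof (cases "j = i")
    case True
    then have "\<bar>t - u \<bullet> j\<bar> \<le> \<bar>a\<bar> + \<epsilon>" using nz Th_support[OF e] by auto
    then show ?thesis using uj by linarith
  next
    case False
    then have "\<bar>t - u \<bullet> j\<bar> < \<epsilon>" using nz chi_nz[OF e] by auto
    then show ?thesis using uj by linarith
  qed
qed

lemma psi_partial:
  fixes u :: "'a::euclidean_space"
  assumes e: "\<epsilon> > 0" and i: "i \<in> Basis"
  shows "frechet_derivative (psi \<epsilon> u i a) (at z) i = rho \<epsilon> u z - rho \<epsilon> (u + a *\<^sub>R i) z"
proof -
  let ?f = "\<lambda>j t. if j = i then Th \<epsilon> a (t - u \<bullet> i) else chi \<epsilon> (t - u \<bullet> j)"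
  have "frechet_derivative (psi \<epsilon> u i a) (at z) i = deriv (?f i) (z \<bullet> i) * (\<Prod>j\<in>Basis - {i}. ?f j (z \<bullet> j))"
    unfolding psi_def by (rule prodfun_partial[of ?f, OF psi_comp_smooth[OF e] i])
  also have "(\<Prod>j\<in>Basis - {i}. ?f j (z \<bullet> j)) = (\<Prod>j\<in>Basis - {i}. chi \<epsilon> (z \<bullet> j - u \<bullet> j))"
    by (intro prod.cong) auto
  also have "deriv (?f i) (z \<bullet> i) = chi \<epsilon> (z \<bullet> i - u \<bullet> i) - chi \<epsilon> (z \<bullet> i - u \<bullet> i - a)"
    using deriv_Th_shift[OF e] by simp
  finally have 1: "frechet_derivative (psi \<epsilon> u i a) (at z) i =
     (chi \<epsilon> (z \<bullet> i - u \<bullet> i) - chi \<epsilon> (z \<bullet> i - u \<bullet> i - a)) * (\<Prod>j\<in>Basis - {i}. chi \<epsilon> (z \<bullet> j - u \<bullet> j))" .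
  have 2: "rho \<epsilon> u z = chi \<epsilon> (z \<bullet> i - u \<bullet> i) * (\<Prod>j\<in>Basis - {i}. chi \<epsilon> (z \<bullet> j - u \<bullet> j))"
    unfolding rho_eq using i by (simp add: prod.remove)
  have "rho \<epsilon> (u + a *\<^sub>R i) z = chi \<epsilon> (z \<bullet> i - (u + a *\<^sub>R i) \<bullet> i) * (\<Prod>j\<in>Basis - {i}. chi \<epsilon> (z \<bullet> j - (u + a *\<^sub>R i) \<bullet> j))"
    unfolding rho_eq using i by (simp add: prod.remove)
  also have "(\<Prod>j\<in>Basis - {i}. chi \<epsilon> (z \<bullet> j - (u + a *\<^sub>R i) \<bullet> j)) = (\<Prod>j\<in>Basis - {i}. chi \<epsilon> (z \<bullet> j - u \<bullet> j))"
    by (intro prod.cong refl) (use i in \<open>auto simp: inner_add_left inner_Basis\<close>)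
  also have "(u + a *\<^sub>R i) \<bullet> i = u \<bullet> i + a" using i by (simp add: inner_add_left)
  finally have 3: "rho \<epsilon> (u + a *\<^sub>R i) z = chi \<epsilon> (z \<bullet> i - u \<bullet> i - a) * (\<Prod>j\<in>Basis - {i}. chi \<epsilon> (z \<bullet> j - u \<bullet> j))"
    by (simp add: algebra_simps)
  show ?thesis unfolding 1 2 3 by (simp add: algebra_simps)
qed

lemma integrable_cball_support:
  fixes h :: "'a::euclidean_space \<Rightarrow> real"
  assumes "continuous_on UNIV h" and "\<And>z. h z \<noteq> 0 \<Longrightarrow> z \<in> cball u R"
  shows "integrable lborel h"
proof -
  have "integrable lborel (\<lambda>x. indicator (cball u R) x *\<^sub>R h x)"
    by (rule borel_integrable_compact) (use assms(1) continuous_on_subset in auto)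
  moreover have "(\<lambda>x. indicator (cball u R) x *\<^sub>R h x) = h"
  proof
    fix x show "indicator (cball u R) x *\<^sub>R h x = h x"
      using assms(2)[of x] by (cases "h x = 0") auto
  qed
  ultimately show ?thesis by simp
qed

lemma integrable_rho:
  fixes u :: "'a::euclidean_space"
  assumes e: "\<epsilon> > 0" and c: "continuous_on UNIV f"
  shows "integrable lborel (\<lambda>z. f z * rho \<epsilon> u z)"
proof (rule integrable_cball_support[where u = u and R = "real DIM('a) * \<epsilon>"])
  show "continuous_on UNIV (\<lambda>z. f z * rho \<epsilon> u z)" using c rho_cont by (intro continuous_intros) auto
  fix z assume "f z * rho \<epsilon> u z \<noteq> 0"
  then have "rho \<epsilon> u z \<noteq> 0" by auto
  then show "z \<in> cball u (real DIM('a) * \<epsilon>)" using rho_support[OF e] by (simp add: dist_norm norm_minus_commute)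
qed


definition Phi :: "real \<Rightarrow> ('a::euclidean_space \<Rightarrow> real) \<Rightarrow> 'a \<Rightarrow> real" where
  "Phi \<epsilon> \<phi> u = (\<integral>z. \<phi> z * rho \<epsilon> u z \<partial>lborel)"

definition LJ :: "('a::euclidean_space \<Rightarrow> 'a) \<Rightarrow> 'a set \<Rightarrow> real" where
  "LJ g K = (\<integral>z. indicator K z * norm (g z) \<partial>lborel)"

lemma wg_meas: "weak_gradient \<phi> g \<Longrightarrow> g \<in> borel_measurable lborel"
  by (simp add: weak_gradient_def)

lemma wg_loc: "weak_gradient \<phi> g \<Longrightarrow> i \<in> Basis \<Longrightarrow> compact K \<Longrightarrow>
    integrable lborel (\<lambda>x. indicator K x * (g x \<bullet> i))"
  unfolding weak_gradient_def set_integrable_def by simp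

lemma wg_id: "weak_gradient \<phi> g \<Longrightarrow> test_fun \<psi> \<Longrightarrow> i \<in> Basis \<Longrightarrow>
   (\<integral>x. \<phi> x * frechet_derivative \<psi> (at x) i \<partial>lborel) = - (\<integral>x. (g x \<bullet> i) * \<psi> x \<partial>lborel)"
  unfolding weak_gradient_def by blast

lemma integrable_normg:
  fixes g :: "'a::euclidean_space \<Rightarrow> 'a"
  assumes wg: "weak_gradient \<phi> g" and K: "compact K"
  shows "integrable lborel (\<lambda>z. indicator K z * norm (g z))"
proof (rule Bochner_Integration.integrable_bound[where f = "\<lambda>z. \<Sum>b\<in>Basis. \<bar>indicator K z * (g z \<bullet> b)\<bar>"])
  show "integrable lborel (\<lambda>z. \<Sum>b\<in>Basis. \<bar>indicator K z * (g z \<bullet> b)\<bar>)"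
    by (intro Bochner_Integration.integrable_sum Bochner_Integration.integrable_abs wg_loc[OF wg _ K])
  have [measurable]: "g \<in> borel_measurable lborel" using wg_meas[OF wg] .
  have [measurable]: "K \<in> sets lborel" using K by (simp add: compact_imp_closed borel_closed)
  show "(\<lambda>z. indicator K z * norm (g z)) \<in> borel_measurable lborel" by measurable
  show "AE z in lborel. norm (indicator K z * norm (g z)) \<le> norm (\<Sum>b\<in>Basis. \<bar>indicator K z * (g z \<bullet> b)\<bar>)"
  proof (rule AE_I2)
    fix z
    have "norm (g z) \<le> (\<Sum>b\<in>Basis. \<bar>g z \<bullet> b\<bar>)" by (rule norm_le_l1)
    moreover have "(\<Sum>b\<in>Basis. \<bar>indicator K z * (g z \<bullet> b)\<bar>) = indicator K z * (\<Sum>b\<in>Basis. \<bar>g z \<bullet> b\<bar>)"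
      by (simp add: sum_distrib_left abs_mult)
    moreover have "(\<Sum>b\<in>Basis. \<bar>g z \<bullet> b\<bar>) \<ge> 0" by (simp add: sum_nonneg)
    ultimately show "norm (indicator K z * norm (g z)) \<le> norm (\<Sum>b\<in>Basis. \<bar>indicator K z * (g z \<bullet> b)\<bar>)"
      by (simp add: indicator_def)
  qed
qed

lemma LJ_nonneg: "LJ g K \<ge> 0"
  unfolding LJ_def by (rule integral_nonneg_AE) (simp add: indicator_def)

lemma LJ_mono:
  assumes wg: "weak_gradient \<phi> g" and "compact K" "compact K'" "K \<subseteq> K'"
  shows "LJ g K \<le> LJ g K'"
  unfolding LJ_def
  by (rule integral_mono[OF integrable_normg[OF wg assms(2)] integrable_normg[OF wg assms(3)]])
     (use assms(4) in \<open>auto simp: indicator_def\<close>)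

lemma Phi_step:
  fixes \<phi> :: "'a::euclidean_space \<Rightarrow> real"
  assumes e: "\<epsilon> > 0" and cont: "continuous_on UNIV \<phi>" and wg: "weak_gradient \<phi> g" and i: "i \<in> Basis"
  shows "\<bar>Phi \<epsilon> \<phi> u - Phi \<epsilon> \<phi> (u + a *\<^sub>R i)\<bar> \<le> \<bar>a\<bar> * LJ g (cball u (\<bar>a\<bar> + real DIM('a) * \<epsilon>))"
proof -
  define K where "K = cball u (\<bar>a\<bar> + real DIM('a) * \<epsilon>)"
  have "(\<integral>x. \<phi> x * frechet_derivative (psi \<epsilon> u i a) (at x) i \<partial>lborel) = - (\<integral>x. (g x \<bullet> i) * psi \<epsilon> u i a x \<partial>lborel)"
    by (rule wg_id[OF wg psi_test[OF e i] i])
  moreover have "(\<integral>x. \<phi> x * frechet_derivative (psi \<epsilon> u i a) (at x) i \<partial>lborel) = Phi \<epsilon> \<phi> u - Phi \<epsilon> \<phi> (u + a *\<^sub>R i)"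
  proof -
    have "(\<integral>x. \<phi> x * frechet_derivative (psi \<epsilon> u i a) (at x) i \<partial>lborel) =
          (\<integral>x. \<phi> x * rho \<epsilon> u x - \<phi> x * rho \<epsilon> (u + a *\<^sub>R i) x \<partial>lborel)"
      by (intro Bochner_Integration.integral_cong refl) (simp add: psi_partial[OF e i] algebra_simps)
    also have "\<dots> = Phi \<epsilon> \<phi> u - Phi \<epsilon> \<phi> (u + a *\<^sub>R i)"
      unfolding Phi_def by (rule Bochner_Integration.integral_diff[OF integrable_rho[OF e cont] integrable_rho[OF e cont]])
    finally show ?thesis .
  qed
  ultimately have eq: "\<bar>Phi \<epsilon> \<phi> u - Phi \<epsilon> \<phi> (u + a *\<^sub>R i)\<bar> = \<bar>\<integral>x. (g x \<bullet> i) * psi \<epsilon> u i a x \<partial>lborel\<bar>" by simp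
  have [measurable]: "g \<in> borel_measurable lborel" using wg_meas[OF wg] .
  have pm: "psi \<epsilon> u i a \<in> borel_measurable lborel"
    using borel_measurable_continuous_onI[OF psi_cont[OF e]] by simp
  have pt: "\<bar>(g z \<bullet> i) * psi \<epsilon> u i a z\<bar> \<le> \<bar>a\<bar> * (indicator K z * norm (g z))" for z
  proof (cases "psi \<epsilon> u i a z = 0")
    case True then show ?thesis by (simp add: indicator_def)
  next
    case False
    then have "z \<in> K" using psi_support[OF e i False] unfolding K_def by (simp add: dist_norm norm_minus_commute)
    moreover have "\<bar>g z \<bullet> i\<bar> \<le> norm (g z)" by (rule Basis_le_norm[OF i])
    moreover have "\<bar>psi \<epsilon> u i a z\<bar> \<le> \<bar>a\<bar>" by (rule psi_bound[OF e i])
    ultimately have "\<bar>g z \<bullet> i\<bar> * \<bar>psi \<epsilon> u i a z\<bar> \<le> norm (g z) * \<bar>a\<bar>"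
      by (intro mult_mono) auto
    then show ?thesis using \<open>z \<in> K\<close> by (simp add: abs_mult mult.commute)
  qed
  have intK: "integrable lborel (\<lambda>z. \<bar>a\<bar> * (indicator K z * norm (g z)))"
    unfolding K_def by (intro integrable_mult_right integrable_normg[OF wg]) simp
  have intG: "integrable lborel (\<lambda>z. (g z \<bullet> i) * psi \<epsilon> u i a z)"
  proof (rule Bochner_Integration.integrable_bound[OF intK])
    show "(\<lambda>z. (g z \<bullet> i) * psi \<epsilon> u i a z) \<in> borel_measurable lborel" using pm by measurable
    show "AE z in lborel. norm ((g z \<bullet> i) * psi \<epsilon> u i a z) \<le> norm (\<bar>a\<bar> * (indicator K z * norm (g z)))"
      using pt by (intro AE_I2) (simp add: indicator_def)
  qed
  have "\<bar>\<integral>x. (g x \<bullet> i) * psi \<epsilon> u i a x \<partial>lborel\<bar> \<le> (\<integral>x. \<bar>(g x \<bullet> i) * psi \<epsilon> u i a x\<bar> \<partial>lborel)"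
    using integral_norm_bound[of lborel "\<lambda>x. (g x \<bullet> i) * psi \<epsilon> u i a x"] by simp
  also have "\<dots> \<le> (\<integral>x. \<bar>a\<bar> * (indicator K x * norm (g x)) \<partial>lborel)"
    by (rule integral_mono[OF integrable_abs[OF intG] intK]) (rule pt)
  also have "\<dots> = \<bar>a\<bar> * LJ g K" unfolding LJ_def by simp
  finally show ?thesis unfolding eq K_def .
qed


lemma sum_abs_le_dim:
  fixes v :: "'a::euclidean_space"
  assumes "B \<subseteq> Basis"
  shows "(\<Sum>b\<in>B. \<bar>v \<bullet> b\<bar>) \<le> real DIM('a) * norm v"
proof -
  have "(\<Sum>b\<in>B. \<bar>v \<bullet> b\<bar>) \<le> (\<Sum>b\<in>Basis. \<bar>v \<bullet> b\<bar>)"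
    by (rule sum_mono2) (use assms in auto)
  also have "\<dots> \<le> (\<Sum>b\<in>(Basis::'a set). norm v)" by (intro sum_mono Basis_le_norm)
  finally show ?thesis by simp
qed

lemma norm_partial_sum:
  fixes v :: "'a::euclidean_space"
  assumes "B \<subseteq> Basis"
  shows "norm (\<Sum>b\<in>B. (v \<bullet> b) *\<^sub>R b) \<le> (\<Sum>b\<in>B. \<bar>v \<bullet> b\<bar>)"
proof -
  have "norm (\<Sum>b\<in>B. (v \<bullet> b) *\<^sub>R b) \<le> (\<Sum>b\<in>B. norm ((v \<bullet> b) *\<^sub>R b))" by (rule norm_sum)
  also have "\<dots> = (\<Sum>b\<in>B. \<bar>v \<bullet> b\<bar>)" by (intro sum.cong refl) (use assms in auto)
  finally show ?thesis .
qed

lemma Phi_path: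
  fixes \<phi> :: "'a::euclidean_space \<Rightarrow> real"
  assumes e: "\<epsilon> > 0" and cont: "continuous_on UNIV \<phi>" and wg: "weak_gradient \<phi> g"
  shows "\<bar>Phi \<epsilon> \<phi> x - Phi \<epsilon> \<phi> y\<bar> \<le> real DIM('a) * norm (y - x) *
            LJ g (cball x ((real DIM('a) + 1) * norm (y - x) + real DIM('a) * \<epsilon>))"
proof -
  define v where "v = y - x"
  define R where "R = (real DIM('a) + 1) * norm v + real DIM('a) * \<epsilon>"
  define Lb where "Lb = LJ g (cball x R)"
  have Lb0: "Lb \<ge> 0" unfolding Lb_def by (rule LJ_nonneg)
  have main: "B \<subseteq> Basis \<Longrightarrow> \<bar>Phi \<epsilon> \<phi> x - Phi \<epsilon> \<phi> (x + (\<Sum>b\<in>B. (v \<bullet> b) *\<^sub>R b))\<bar> \<le> (\<Sum>b\<in>B. \<bar>v \<bullet> b\<bar>) * Lb"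
    if "finite B" for B
    using that
  proof (induction B rule: finite_induct)
    case empty then show ?case by simp
  next
    case (insert b B)
    define w where "w = x + (\<Sum>b\<in>B. (v \<bullet> b) *\<^sub>R b)"
    define a where "a = v \<bullet> b"
    have B: "B \<subseteq> Basis" and b: "b \<in> Basis" using insert.prems by auto
    have ww: "x + (\<Sum>b\<in>insert b B. (v \<bullet> b) *\<^sub>R b) = w + a *\<^sub>R b"
      unfolding w_def a_def using insert.hyps by (simp add: algebra_simps)
    have st: "\<bar>Phi \<epsilon> \<phi> w - Phi \<epsilon> \<phi> (w + a *\<^sub>R b)\<bar> \<le> \<bar>a\<bar> * LJ g (cball w (\<bar>a\<bar> + real DIM('a) * \<epsilon>))"
      by (rule Phi_step[OF e cont wg b])
    have sub: "cball w (\<bar>a\<bar> + real DIM('a) * \<epsilon>) \<subseteq> cball x R"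
    proof
      fix z assume z: "z \<in> cball w (\<bar>a\<bar> + real DIM('a) * \<epsilon>)"
      have "norm (w - x) \<le> (\<Sum>b\<in>B. \<bar>v \<bullet> b\<bar>)" unfolding w_def using norm_partial_sum[OF B] by simp
      also have "\<dots> \<le> real DIM('a) * norm v" by (rule sum_abs_le_dim[OF B])
      finally have wx: "dist x w \<le> real DIM('a) * norm v" by (simp add: dist_norm norm_minus_commute)
      have "\<bar>a\<bar> \<le> norm v" unfolding a_def by (rule Basis_le_norm[OF b])
      moreover have "dist x z \<le> dist x w + dist w z" by (rule dist_triangle)
      ultimately show "z \<in> cball x R" using z wx unfolding R_def by (simp add: algebra_simps)
    qed
    have "LJ g (cball w (\<bar>a\<bar> + real DIM('a) * \<epsilon>)) \<le> Lb"
      unfolding Lb_def by (rule LJ_mono[OF wg compact_cball compact_cball sub])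
    then have st': "\<bar>Phi \<epsilon> \<phi> w - Phi \<epsilon> \<phi> (w + a *\<^sub>R b)\<bar> \<le> \<bar>a\<bar> * Lb"
      using st by (meson abs_ge_zero mult_left_mono order_trans)
    have IH: "\<bar>Phi \<epsilon> \<phi> x - Phi \<epsilon> \<phi> w\<bar> \<le> (\<Sum>b\<in>B. \<bar>v \<bullet> b\<bar>) * Lb"
      unfolding w_def by (rule insert.IH[OF B])
    have "(\<Sum>b\<in>insert b B. \<bar>v \<bullet> b\<bar>) = \<bar>a\<bar> + (\<Sum>b\<in>B. \<bar>v \<bullet> b\<bar>)"
      unfolding a_def using insert.hyps by simp
    then show ?case unfolding ww using IH st' by (simp add: algebra_simps)
  qed
  have "x + (\<Sum>b\<in>Basis. (v \<bullet> b) *\<^sub>R b) = y" unfolding v_def by (simp add: euclidean_representation)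
  then have "\<bar>Phi \<epsilon> \<phi> x - Phi \<epsilon> \<phi> y\<bar> \<le> (\<Sum>b\<in>Basis. \<bar>v \<bullet> b\<bar>) * Lb" using main[OF finite_Basis] by simp
  also have "\<dots> \<le> real DIM('a) * norm v * Lb"
    by (rule mult_right_mono[OF sum_abs_le_dim Lb0]) simp
  finally show ?thesis unfolding Lb_def R_def v_def .
qed

lemma rho_translate:
  fixes u :: "'a::euclidean_space"
  shows "(\<integral>z. rho \<epsilon> u z \<partial>lborel) = (\<integral>z. rho \<epsilon> (0::'a) z \<partial>lborel)"
proof -
  have m: "rho \<epsilon> u \<in> borel_measurable borel" by (rule borel_measurable_continuous_onI[OF rho_cont])
  have "(\<integral>z. rho \<epsilon> u z \<partial>lborel) = (\<integral>z. rho \<epsilon> u z \<partial>(distr lborel borel ((+) u)))"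
    by (simp add: lborel_distr_plus)
  also have "\<dots> = (\<integral>z. rho \<epsilon> u (u + z) \<partial>lborel)"
    by (rule integral_distr) (use m in auto)
  also have "\<dots> = (\<integral>z. rho \<epsilon> (0::'a) z \<partial>lborel)"
    by (simp add: rho_eq inner_add_left)
  finally show ?thesis .
qed

lemma rho_int_lower:
  assumes e: "\<epsilon> > 0"
  shows "(exp (-2) * exp (-2)) ^ DIM('a) * measure lborel (ball (0::'a::euclidean_space) (\<epsilon>/2))
           \<le> (\<integral>z. rho \<epsilon> (0::'a) z \<partial>lborel)"
proof -
  define m :: real where "m = (exp (-2) * exp (-2)) ^ DIM('a)"
  have pt: "m * (indicator (ball (0::'a) (\<epsilon>/2)) z :: real) \<le> rho \<epsilon> (0::'a) z" for z
  proof (cases "z \<in> ball 0 (\<epsilon>/2)")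
    case True
    have "(\<Prod>j\<in>(Basis::'a set). exp (-2) * exp (-2)) \<le> (\<Prod>j\<in>Basis. chi \<epsilon> (z \<bullet> j - 0 \<bullet> j))"
    proof (rule prod_mono)
      fix j :: 'a assume j: "j \<in> Basis"
      have "\<bar>z \<bullet> j\<bar> \<le> norm z" by (rule Basis_le_norm[OF j])
      then have "\<bar>z \<bullet> j\<bar> \<le> \<epsilon>/2" using True by simp
      then show "0 \<le> exp (-2) * exp (-2::real) \<and> exp (-2) * exp (-2) \<le> chi \<epsilon> (z \<bullet> j - 0 \<bullet> j)"
        using chi_pos[OF e] by simp
    qed
    then show ?thesis using True unfolding m_def rho_eq by simp
  next
    case False then show ?thesis using rho_nonneg[of \<epsilon> 0 z] by simp
  qed
  have i1: "integrable lborel (\<lambda>z. m * indicator (ball (0::'a) (\<epsilon>/2)) z)"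
    using emeasure_lborel_ball_finite[of "0::'a" "\<epsilon>/2"]
    by (intro integrable_mult_right integrable_real_indicator) (auto simp: top.not_eq_extremum)
  have i2: "integrable lborel (rho \<epsilon> (0::'a))"
    using integrable_rho[OF e, of "\<lambda>_. 1" 0] by simp
  have "(\<integral>z. m * indicator (ball (0::'a) (\<epsilon>/2)) z \<partial>lborel) \<le> (\<integral>z. rho \<epsilon> (0::'a) z \<partial>lborel)"
    by (rule integral_mono[OF i1 i2]) (rule pt)
  moreover have "(\<integral>z. m * indicator (ball (0::'a) (\<epsilon>/2)) z \<partial>lborel) = m * measure lborel (ball (0::'a) (\<epsilon>/2))"
    by simp
  ultimately show ?thesis unfolding m_def by simp
qed

lemma moll_error:
  fixes \<phi> :: "'a::euclidean_space \<Rightarrow> real"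
  assumes e: "\<epsilon> > 0" and cont: "continuous_on UNIV \<phi>"
    and hb: "\<And>a b. \<bar>\<phi> a - \<phi> b\<bar> \<le> L * norm (a - b) powr \<alpha>" and L: "L \<ge> 0" and \<alpha>: "\<alpha> > 0"
  shows "\<bar>(\<integral>z. rho \<epsilon> u z \<partial>lborel) * \<phi> u - Phi \<epsilon> \<phi> u\<bar> \<le> L * (real DIM('a) * \<epsilon>) powr \<alpha> * (\<integral>z. rho \<epsilon> u z \<partial>lborel)"
proof -
  define C where "C = L * (real DIM('a) * \<epsilon>) powr \<alpha>"
  have ir: "integrable lborel (rho \<epsilon> u)" using integrable_rho[OF e, of "\<lambda>_. 1" u] by simp
  have i1: "integrable lborel (\<lambda>z. \<phi> u * rho \<epsilon> u z)" using ir by simp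
  have i2: "integrable lborel (\<lambda>z. \<phi> z * rho \<epsilon> u z)" by (rule integrable_rho[OF e cont])
  have "(\<integral>z. rho \<epsilon> u z \<partial>lborel) * \<phi> u - Phi \<epsilon> \<phi> u = (\<integral>z. \<phi> u * rho \<epsilon> u z - \<phi> z * rho \<epsilon> u z \<partial>lborel)"
    unfolding Phi_def by (simp add: Bochner_Integration.integral_diff[OF i1 i2] mult.commute)
  moreover have "\<bar>\<integral>z. \<phi> u * rho \<epsilon> u z - \<phi> z * rho \<epsilon> u z \<partial>lborel\<bar> \<le> (\<integral>z. \<bar>\<phi> u * rho \<epsilon> u z - \<phi> z * rho \<epsilon> u z\<bar> \<partial>lborel)"
    using integral_norm_bound[of lborel "\<lambda>z. \<phi> u * rho \<epsilon> u z - \<phi> z * rho \<epsilon> u z"] by simp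
  moreover have "(\<integral>z. \<bar>\<phi> u * rho \<epsilon> u z - \<phi> z * rho \<epsilon> u z\<bar> \<partial>lborel) \<le> (\<integral>z. C * rho \<epsilon> u z \<partial>lborel)"
  proof (rule integral_mono)
    show "integrable lborel (\<lambda>z. \<bar>\<phi> u * rho \<epsilon> u z - \<phi> z * rho \<epsilon> u z\<bar>)"
      by (intro integrable_abs Bochner_Integration.integrable_diff i1 i2)
    show "integrable lborel (\<lambda>z. C * rho \<epsilon> u z)" using ir by simp
    fix z
    show "\<bar>\<phi> u * rho \<epsilon> u z - \<phi> z * rho \<epsilon> u z\<bar> \<le> C * rho \<epsilon> u z"
    proof (cases "rho \<epsilon> u z = 0")
      case True then show ?thesis by simp
    next
      case False
      have "norm (u - z) \<le> real DIM('a) * \<epsilon>" using rho_support[OF e False] by (simp add: norm_minus_commute)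
      then have "norm (u - z) powr \<alpha> \<le> (real DIM('a) * \<epsilon>) powr \<alpha>" using \<alpha> by (intro powr_mono2) auto
      then have "\<bar>\<phi> u - \<phi> z\<bar> \<le> C" unfolding C_def using hb[of u z] L by (meson mult_left_mono order_trans)
      moreover have "\<bar>\<phi> u * rho \<epsilon> u z - \<phi> z * rho \<epsilon> u z\<bar> = \<bar>\<phi> u - \<phi> z\<bar> * rho \<epsilon> u z"
        using rho_nonneg[of \<epsilon> u z] by (simp add: left_diff_distrib[symmetric] abs_mult)
      ultimately show ?thesis using rho_nonneg[of \<epsilon> u z] by (simp add: mult_right_mono)
    qed
  qed
  moreover have "(\<integral>z. C * rho \<epsilon> u z \<partial>lborel) = C * (\<integral>z. rho \<epsilon> u z \<partial>lborel)" by simp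
  ultimately show ?thesis unfolding C_def by linarith
qed

lemma main_estimate:
  fixes \<phi> :: "'a::euclidean_space \<Rightarrow> real"
  assumes e: "\<epsilon> > 0" and cont: "continuous_on UNIV \<phi>" and wg: "weak_gradient \<phi> g"
    and hb: "\<And>a b. \<bar>\<phi> a - \<phi> b\<bar> \<le> L * norm (a - b) powr \<alpha>" and L: "L \<ge> 0" and \<alpha>: "\<alpha> > 0"
  shows "\<bar>\<phi> x - \<phi> y\<bar> \<le> 2 * L * (real DIM('a) * \<epsilon>) powr \<alpha> +
     real DIM('a) * norm (y - x) * LJ g (cball x ((real DIM('a) + 1) * norm (y - x) + real DIM('a) * \<epsilon>)) /
       ((exp (-2) * exp (-2)) ^ DIM('a) * measure lborel (ball (0::'a) (\<epsilon>/2)))"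
proof -
  define c where "c = (\<integral>z. rho \<epsilon> (0::'a) z \<partial>lborel)"
  define c0 where "c0 = (exp (-2) * exp (-2)) ^ DIM('a) * measure lborel (ball (0::'a) (\<epsilon>/2))"
  define P where "P = real DIM('a) * norm (y - x) * LJ g (cball x ((real DIM('a) + 1) * norm (y - x) + real DIM('a) * \<epsilon>))"
  define C where "C = L * (real DIM('a) * \<epsilon>) powr \<alpha>"
  have c0: "c0 > 0" unfolding c0_def using content_ball_pos[of "\<epsilon>/2" "0::'a"] e by simp
  have cc0: "c0 \<le> c" unfolding c_def c0_def by (rule rho_int_lower[OF e])
  have cpos: "c > 0" using c0 cc0 by simp
  have P0: "P \<ge> 0" unfolding P_def by (simp add: LJ_nonneg)
  have ex: "\<bar>c * \<phi> x - Phi \<epsilon> \<phi> x\<bar> \<le> C * c"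
    using moll_error[OF e cont hb L \<alpha>, of x] rho_translate[of \<epsilon> x] unfolding c_def C_def by simp
  have ey: "\<bar>c * \<phi> y - Phi \<epsilon> \<phi> y\<bar> \<le> C * c"
    using moll_error[OF e cont hb L \<alpha>, of y] rho_translate[of \<epsilon> y] unfolding c_def C_def by simp
  have exy: "\<bar>Phi \<epsilon> \<phi> x - Phi \<epsilon> \<phi> y\<bar> \<le> P" unfolding P_def by (rule Phi_path[OF e cont wg])
  have "\<bar>c * \<phi> x - c * \<phi> y\<bar> = \<bar>c\<bar> * \<bar>\<phi> x - \<phi> y\<bar>" by (simp add: abs_mult[symmetric] right_diff_distrib)
  then have "c * \<bar>\<phi> x - \<phi> y\<bar> = \<bar>c * \<phi> x - c * \<phi> y\<bar>" using cpos by simp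
  also have "\<dots> \<le> 2 * C * c + P" using ex ey exy by linarith
  finally have "\<bar>\<phi> x - \<phi> y\<bar> \<le> (2 * C * c + P) / c" using cpos by (simp add: field_simps)
  also have "\<dots> = 2 * C + P / c" using cpos by (simp add: field_simps)
  also have "P / c \<le> P / c0" using P0 c0 cc0 by (simp add: divide_left_mono)
  finally show ?thesis unfolding C_def P_def c0_def by simp
qed


lemma exists_two_points: "\<exists>x y::'a::euclidean_space. x \<noteq> y"
proof -
  obtain b :: 'a where "b \<in> Basis" using nonempty_Basis by blast
  then have "b \<noteq> 0" by auto
  then show ?thesis by blast
qed

lemma holder_quot_nonneg: "holder_quot \<alpha> \<phi> x y \<ge> 0"
  by (simp add: holder_quot_def)

lemma holder_quot_le:
  assumes "holder_finite \<alpha> \<phi>" "x \<noteq> y"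
  shows "holder_quot \<alpha> \<phi> x y \<le> holder_seminorm \<alpha> \<phi>"
proof -
  have "holder_quot \<alpha> \<phi> (fst (x,y)) (snd (x,y)) \<le> holder_seminorm \<alpha> \<phi>"
    unfolding holder_seminorm_def
    by (rule cSUP_upper) (use assms in \<open>auto simp: holder_finite_def\<close>)
  then show ?thesis by simp
qed

lemma holder_seminorm_nonneg:
  assumes "holder_finite \<alpha> (\<phi>::'a::euclidean_space \<Rightarrow> real)"
  shows "holder_seminorm \<alpha> \<phi> \<ge> 0"
proof -
  obtain x y :: 'a where "x \<noteq> y" using exists_two_points by blast
  then show ?thesis using holder_quot_le[OF assms] holder_quot_nonneg order_trans by blast
qed

lemma holder_bound:
  assumes "holder_finite \<alpha> \<phi>" "\<alpha> > 0"
  shows "\<bar>\<phi> x - \<phi> y\<bar> \<le> holder_seminorm \<alpha> \<phi> * norm (x - y) powr \<alpha>"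
proof (cases "x = y")
  case True then show ?thesis by simp
next
  case False
  then have "norm (x - y) powr \<alpha> > 0" by simp
  with holder_quot_le[OF assms(1) False] show ?thesis
    by (simp add: holder_quot_def divide_simps)
qed

lemma attain_crit:
  fixes \<phi> :: "'a::euclidean_space \<Rightarrow> real"
  assumes cont: "continuous_on UNIV \<phi>" and hf: "holder_finite \<alpha> \<phi>"
    and key: "\<And>e. e > 0 \<Longrightarrow> \<exists>\<delta>>0. \<exists>M. \<forall>x y. x \<noteq> y \<longrightarrow>
        (dist x y < \<delta> \<or> dist x y > 1/\<delta> \<or> norm x > M) \<longrightarrow>
        holder_quot \<alpha> \<phi> x y \<le> holder_seminorm \<alpha> \<phi> / 2 + e"
  shows "\<exists>x0 y0. x0 \<noteq> y0 \<and> holder_seminorm \<alpha> \<phi> = holder_quot \<alpha> \<phi> x0 y0"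
proof -
  define L where "L = holder_seminorm \<alpha> \<phi>"
  define Q where "Q = (\<lambda>xy::'a\<times>'a. holder_quot \<alpha> \<phi> (fst xy) (snd xy))"
  define S where "S = {(x::'a, y). x \<noteq> y}"
  have LQ: "L = (SUP xy\<in>S. Q xy)" unfolding L_def holder_seminorm_def Q_def S_def by simp
  have bdd: "bdd_above (Q ` S)" using hf unfolding holder_finite_def Q_def S_def by simp
  have Sne: "S \<noteq> {}" using exists_two_points unfolding S_def by auto
  have L0: "L \<ge> 0" unfolding L_def by (rule holder_seminorm_nonneg[OF hf])
  show ?thesis
  proof (cases "L = 0")
    case True
    obtain x y :: 'a where xy: "x \<noteq> y" using exists_two_points by blast
    have "holder_quot \<alpha> \<phi> x y \<le> L" unfolding L_def using holder_quot_le[OF hf xy] .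
    then have "holder_quot \<alpha> \<phi> x y = L" using True holder_quot_nonneg[of \<alpha> \<phi> x y] by linarith
    then show ?thesis using xy unfolding L_def by metis
  next
    case False
    then have Lpos: "L > 0" using L0 by simp
    obtain \<delta> M where d: "\<delta> > 0" and dM: "\<And>x y. x \<noteq> y \<Longrightarrow>
        (dist x y < \<delta> \<or> dist x y > 1/\<delta> \<or> norm x > M) \<Longrightarrow> Q (x,y) \<le> L/2 + L/4"
      using key[of "L/4"] Lpos unfolding Q_def L_def by auto
    define K where "K = {xy::'a\<times>'a. \<delta> \<le> dist (fst xy) (snd xy) \<and> dist (fst xy) (snd xy) \<le> 1/\<delta> \<and> norm (fst xy) \<le> M}"
    have KS: "K \<subseteq> S" using d unfolding K_def S_def by auto
    have "closed K"
    proof -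
      have "K = {xy. \<delta> \<le> dist (fst xy) (snd xy)} \<inter> {xy. dist (fst xy) (snd xy) \<le> 1/\<delta>} \<inter> {xy. norm (fst xy) \<le> M}"
        unfolding K_def by auto
      moreover have "closed {xy::'a\<times>'a. \<delta> \<le> dist (fst xy) (snd xy)}"
        by (intro closed_Collect_le continuous_intros)
      moreover have "closed {xy::'a\<times>'a. dist (fst xy) (snd xy) \<le> 1/\<delta>}"
        by (intro closed_Collect_le continuous_intros)
      moreover have "closed {xy::'a\<times>'a. norm (fst xy) \<le> M}"
        by (intro closed_Collect_le continuous_intros)
      ultimately show ?thesis by (simp add: closed_Int)
    qed
    moreover have "bounded K"
    proof -
      have "K \<subseteq> cball 0 M \<times> cball 0 (M + 1/\<delta>)"
      proof
        fix xy assume "xy \<in> K"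
        then have "norm (fst xy) \<le> M" "dist (fst xy) (snd xy) \<le> 1/\<delta>" unfolding K_def by auto
        moreover have "norm (snd xy) \<le> norm (fst xy) + dist (fst xy) (snd xy)"
          by (metis dist_commute dist_norm norm_triangle_sub)
        ultimately show "xy \<in> cball 0 M \<times> cball 0 (M + 1/\<delta>)"
          by (cases xy) auto
      qed
      then show ?thesis by (rule bounded_subset[OF bounded_Times[OF bounded_cball bounded_cball]])
    qed
    ultimately have cK: "compact K" using compact_eq_bounded_closed by blast
    obtain p where p: "p \<in> S" "L*(3/4) < Q p"
      using less_cSUP_iff[OF Sne bdd, of "L*(3/4)"] Lpos LQ by auto
    have "p \<in> K"
    proof (rule ccontr)
      assume "p \<notin> K"
      obtain x y where pxy: "p = (x,y)" "x \<noteq> y" using p(1) unfolding S_def by auto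
      then have "dist x y < \<delta> \<or> dist x y > 1/\<delta> \<or> norm x > M" using \<open>p \<notin> K\<close> unfolding K_def by auto
      then have "Q (x,y) \<le> L/2 + L/4" using dM[OF pxy(2)] by blast
      then show False using p(2) pxy by simp
    qed
    then have Kne: "K \<noteq> {}" by auto
    have "continuous_on K Q"
    proof -
      have "\<And>xy. xy \<in> K \<Longrightarrow> norm (fst xy - snd xy) \<noteq> 0"
        using d unfolding K_def by (auto simp: dist_norm)
      then show ?thesis unfolding Q_def holder_quot_def
        by (intro continuous_intros continuous_on_compose2[OF cont, of _ fst] 
               continuous_on_compose2[OF cont, of _ snd]) auto
    qed
    then obtain p0 where p0: "p0 \<in> K" "\<And>q. q \<in> K \<Longrightarrow> Q q \<le> Q p0"
      using continuous_attains_sup[OF cK Kne] by blast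
    have "L \<le> Q p0"
    proof -
      have "(SUP xy\<in>S. Q xy) \<le> max (Q p0) (L/2 + L/4)"
      proof (rule cSUP_least[OF Sne])
        fix q assume "q \<in> S"
        then obtain x y where qxy: "q = (x,y)" "x \<noteq> y" unfolding S_def by auto
        show "Q q \<le> max (Q p0) (L/2 + L/4)"
        proof (cases "q \<in> K")
          case True then have "Q q \<le> Q p0" using p0 by blast
          then show ?thesis by linarith
        next
          case False
          then have "dist x y < \<delta> \<or> dist x y > 1/\<delta> \<or> norm x > M" using qxy unfolding K_def by auto
          then show ?thesis using dM[OF qxy(2)] qxy by simp
        qed
      qed
      then show ?thesis using Lpos LQ by linarith
    qed
    moreover have "Q p0 \<le> L" unfolding LQ by (rule cSUP_upper[OF _ bdd]) (use p0 KS in auto)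
    ultimately have "L = Q p0" by simp
    moreover obtain x0 y0 where "p0 = (x0, y0)" "x0 \<noteq> y0" using p0(1) KS unfolding S_def by auto
    ultimately show ?thesis unfolding L_def Q_def by auto
  qed
qed


lemma tail_small:
  fixes f :: "'b \<Rightarrow> ennreal" and A :: "real \<Rightarrow> 'b set"
  assumes fm: "f \<in> borel_measurable M" and fin: "(\<integral>\<^sup>+x. f x \<partial>M) < \<infinity>"
    and As: "\<And>t. A t \<in> sets M" and Amono: "\<And>s t. s \<le> t \<Longrightarrow> A t \<subseteq> A s"
    and Aout: "\<And>x. x \<in> space M \<Longrightarrow> f x = 0 \<or> (\<exists>t. x \<notin> A t)"
    and e: "e > 0"
  shows "\<exists>T. \<forall>t\<ge>T. (\<integral>\<^sup>+x. f x * indicator (A t) x \<partial>M) < e"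
proof -
  define F where "F = (\<lambda>n::nat. \<lambda>x. f x * indicator (A (real n)) x)"
  have dec: "decseq F"
  proof (intro antimonoI le_funI)
    fix i j :: nat and x assume "i \<le> j"
    then have "A (real j) \<subseteq> A (real i)" by (intro Amono) simp
    then show "F j x \<le> F i x" unfolding F_def by (cases "x \<in> A (real j)") (auto simp: indicator_def)
  qed
  have Fm: "\<And>i. F i \<in> borel_measurable M" unfolding F_def using fm As by measurable
  have Ffin: "\<And>i. (\<integral>\<^sup>+ x. F i x \<partial>M) < \<infinity>"
  proof -
    fix i have "(\<integral>\<^sup>+ x. F i x \<partial>M) \<le> (\<integral>\<^sup>+x. f x \<partial>M)"
      unfolding F_def by (intro nn_integral_mono) (auto simp: indicator_def)
    then show "(\<integral>\<^sup>+ x. F i x \<partial>M) < \<infinity>" using fin by (simp add: le_less_trans)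
  qed
  have lim0: "(\<integral>\<^sup>+ x. (INF i. F i x) \<partial>M) = 0"
  proof -
    have "(\<integral>\<^sup>+ x. (INF i. F i x) \<partial>M) = (\<integral>\<^sup>+ x. 0 \<partial>M)"
    proof (rule nn_integral_cong)
      fix x assume "x \<in> space M"
      then consider "f x = 0" | t where "x \<notin> A t" using Aout by blast
      then show "(INF i. F i x) = 0"
      proof cases
        case 1 then show ?thesis by (simp add: F_def)
      next
        case 2
        obtain n :: nat where "real n \<ge> t" using real_arch_simple by blast
        then have "x \<notin> A (real n)" using 2 Amono by blast
        then have "F n x = 0" by (simp add: F_def)
        then show ?thesis by (metis INF_lower2 UNIV_I le_zero_eq order_refl)
      qed
    qed
    then show ?thesis by simp
  qed
  then have "(INF i. integral\<^sup>N M (F i)) = 0"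
    using nn_integral_monotone_convergence_INF_decseq[OF dec Fm Ffin] by simp
  then obtain n where n: "integral\<^sup>N M (F n) < e" using e by (metis INF_less_iff)
  show ?thesis
  proof (intro exI allI impI)
    fix t assume "real n \<le> t"
    then have "(\<integral>\<^sup>+x. f x * indicator (A t) x \<partial>M) \<le> integral\<^sup>N M (F n)"
      unfolding F_def using Amono[of "real n" t]
      by (intro nn_integral_mono) (auto simp: indicator_def)
    then show "(\<integral>\<^sup>+x. f x * indicator (A t) x \<partial>M) < e" using n by simp
  qed
qed


lemma tail_small_real:
  fixes f :: "'b \<Rightarrow> real" and A :: "real \<Rightarrow> 'b set"
  assumes int: "integrable M f" and nn: "\<And>x. f x \<ge> 0"
    and As: "\<And>t. A t \<in> sets M" and Amono: "\<And>s t. s \<le> t \<Longrightarrow> A t \<subseteq> A s"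
    and Aout: "\<And>x. x \<in> space M \<Longrightarrow> f x = 0 \<or> (\<exists>t. x \<notin> A t)"
    and e: "e > 0"
  shows "\<exists>T. \<forall>t\<ge>T. (\<integral>x. f x * indicator (A t) x \<partial>M) < e"
proof -
  have fm: "(\<lambda>x. ennreal (f x)) \<in> borel_measurable M" using borel_measurable_integrable[OF int] by measurable
  have "(\<integral>\<^sup>+x. ennreal (f x) \<partial>M) = ennreal (integral\<^sup>L M f)"
    by (rule nn_integral_eq_integral[OF int]) (simp add: nn)
  then have fin: "(\<integral>\<^sup>+x. ennreal (f x) \<partial>M) < \<infinity>" by simp
  have "\<exists>T. \<forall>t\<ge>T. (\<integral>\<^sup>+x. ennreal (f x) * indicator (A t) x \<partial>M) < ennreal e"
  proof (rule tail_small[OF fm fin As Amono])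
    show "ennreal (f x) = 0 \<or> (\<exists>t. x \<notin> A t)" if "x \<in> space M" for x
      using Aout[OF that] by auto
  qed (use e in auto)
  then obtain T where T: "\<And>t. t \<ge> T \<Longrightarrow> (\<integral>\<^sup>+x. ennreal (f x) * indicator (A t) x \<partial>M) < ennreal e"
    by blast
  show ?thesis
  proof (intro exI allI impI)
    fix t assume t: "T \<le> t"
    have eq1: "(\<integral>\<^sup>+x. ennreal (f x) * indicator (A t) x \<partial>M) = (\<integral>\<^sup>+x. ennreal (f x * indicator (A t) x) \<partial>M)"
      by (intro nn_integral_cong) (simp add: indicator_def)
    have "(\<integral>\<^sup>+x. ennreal (f x * indicator (A t) x) \<partial>M) = ennreal (\<integral>x. f x * indicator (A t) x \<partial>M)"
      by (rule nn_integral_eq_integral[OF integrable_real_mult_indicator[OF As int]]) (simp add: nn)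
    then have "ennreal (\<integral>x. f x * indicator (A t) x \<partial>M) < ennreal e" using T[OF t] eq1 by simp
    moreover have "(\<integral>x. f x * indicator (A t) x \<partial>M) \<ge> 0"
      by (rule integral_nonneg_AE) (simp add: nn)
    ultimately show "(\<integral>x. f x * indicator (A t) x \<partial>M) < e" by (simp add: ennreal_less_iff)
  qed
qed

lemma lambda_pt:
  fixes t lam p :: real
  assumes t: "t \<ge> 0" and l: "lam > 0" and p: "p \<ge> 1"
  shows "t \<le> lam powr (1-p) * t powr p + lam"
proof (cases "t \<le> lam")
  case True then show ?thesis using l t by (simp add: add_increasing)
next
  case False
  then have tl: "t > lam" by simp
  have "t powr p = t powr ((p - 1) + 1)" by simp
  also have "\<dots> = t powr (p - 1) * t powr 1" by (rule powr_add)
  finally have "t powr p = t powr (p - 1) * t" using tl l by simp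
  moreover have "t powr (p-1) \<ge> lam powr (p-1)" using tl l p by (intro powr_mono2) auto
  moreover have "lam powr (1-p) * lam powr (p-1) = 1" using l by (simp add: powr_add[symmetric])
  ultimately have "lam powr (1-p) * lam powr (p-1) \<le> lam powr (1-p) * t powr (p-1)"
    by (intro mult_left_mono) auto
  then have "1 \<le> lam powr (1-p) * t powr (p-1)" using \<open>lam powr (1-p) * lam powr (p-1) = 1\<close> by simp
  then have "t \<le> (lam powr (1-p) * t powr (p-1)) * t" using tl l by (simp add: mult_le_cancel_right1)
  then have "lam powr (1-p) * t powr p \<ge> t" using \<open>t powr p = t powr (p - 1) * t\<close> by (simp add: mult.assoc)
  then show ?thesis using l by simp
qed

lemma lambda_bound:
  fixes g :: "'a::euclidean_space \<Rightarrow> 'a"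
  assumes wg: "weak_gradient \<phi> g" and K: "compact K" and l: "lam > 0" and p: "p \<ge> 1"
    and hint: "integrable lborel (\<lambda>z. norm (g z) powr p)"
  shows "LJ g K \<le> lam powr (1-p) * (\<integral>z. norm (g z) powr p * indicator K z \<partial>lborel) + lam * measure lborel K"
proof -
  have Ks: "K \<in> sets lborel" using K by (simp add: compact_imp_closed borel_closed)
  have Kf: "emeasure lborel K < \<infinity>" using K by (rule emeasure_compact_finite)
  have i2: "integrable lborel (\<lambda>z. lam powr (1-p) * (norm (g z) powr p * indicator K z) + lam * indicator K z)"
    using Kf by (intro Bochner_Integration.integrable_add integrable_mult_right integrable_real_mult_indicator[OF Ks hint]
        integrable_real_indicator Ks) auto
  have "LJ g K \<le> (\<integral>z. lam powr (1-p) * (norm (g z) powr p * indicator K z) + lam * indicator K z \<partial>lborel)"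
    unfolding LJ_def
  proof (rule integral_mono[OF integrable_normg[OF wg K] i2])
    fix z
    show "indicator K z * norm (g z) \<le> lam powr (1-p) * (norm (g z) powr p * indicator K z) + lam * indicator K z"
      using lambda_pt[OF norm_ge_zero l p, of "g z"] by (simp add: indicator_def)
  qed
  also have "\<dots> = lam powr (1-p) * (\<integral>z. norm (g z) powr p * indicator K z \<partial>lborel) + lam * measure lborel K"
    using Kf Ks by (subst Bochner_Integration.integral_add) (auto intro!: integrable_mult_right integrable_real_mult_indicator[OF Ks hint] integrable_real_indicator)
  finally show ?thesis .
qed

lemma scale_real:
  fixes N :: nat and r V \<Lambda> e p EE meas J :: real
  assumes r: "r > 0" and V: "V > 0" and \<Lambda>: "\<Lambda> > 0" and e: "e > 0" and p: "p > 1"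
    and EE: "EE \<ge> 0" "EE \<le> (e/2) * (e/(2*V*\<Lambda>^N)) powr (p-1)"
    and meas: "meas \<le> V * (\<Lambda>*r)^N"
    and J: "J \<le> ((e/(2*V*\<Lambda>^N)) * r powr (-(N/p))) powr (1-p) * EE + ((e/(2*V*\<Lambda>^N)) * r powr (-(N/p))) * meas"
  shows "J \<le> e * r powr (N - N/p)"
proof -
  define \<kappa> where "\<kappa> = e/(2*V*\<Lambda>^N)"
  have \<kappa>: "\<kappa> > 0" unfolding \<kappa>_def using e V \<Lambda> by simp
  define lam where "lam = \<kappa> * r powr (-(N/p))"
  have lam: "lam > 0" unfolding lam_def using \<kappa> r by simp
  have l1: "lam powr (1-p) = \<kappa> powr (1-p) * r powr (N - N/p)"
  proof -
    have "lam powr (1-p) = \<kappa> powr (1-p) * (r powr (-(N/p))) powr (1-p)"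
      unfolding lam_def using \<kappa> r by (simp add: powr_mult)
    also have "(r powr (-(N/p))) powr (1-p) = r powr (N - N/p)"
    proof -
      have ex: "-(real N/p)*(1-p) = real N - real N/p" using p by (simp add: field_simps)
      show ?thesis by (simp only: powr_powr ex)
    qed
    finally show ?thesis .
  qed
  have t1: "lam powr (1-p) * EE \<le> (e/2) * r powr (N - N/p)"
  proof -
    have "lam powr (1-p) * EE \<le> lam powr (1-p) * ((e/2) * \<kappa> powr (p-1))"
      using EE unfolding \<kappa>_def by (intro mult_left_mono) auto
    also have "\<dots> = (e/2) * r powr (N - N/p) * (\<kappa> powr (1-p) * \<kappa> powr (p-1))"
      unfolding l1 by (simp add: algebra_simps)
    also have "\<kappa> powr (1-p) * \<kappa> powr (p-1) = 1" using \<kappa> by (simp add: powr_add[symmetric])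
    finally show ?thesis by simp
  qed
  have t2: "lam * meas \<le> (e/2) * r powr (N - N/p)"
  proof -
    have "lam * meas \<le> lam * (V * (\<Lambda>*r)^N)" using meas lam by (intro mult_left_mono) auto
    also have "\<dots> = \<kappa> * V * \<Lambda>^N * (r powr (-(N/p)) * r powr (real N))"
      unfolding lam_def using r by (simp add: power_mult_distrib powr_realpow)
    also have "r powr (-(N/p)) * r powr (real N) = r powr (N - N/p)" by (simp add: powr_add[symmetric])
    also have "\<kappa> * V * \<Lambda>^N = e/2" unfolding \<kappa>_def using V \<Lambda> by simp
    finally show ?thesis .
  qed
  have "J \<le> lam powr (1-p) * EE + lam * meas" using J unfolding lam_def \<kappa>_def .
  then show ?thesis using t1 t2 by linarith
qed


lemma measure_cball_eq: "r \<ge> 0 \<Longrightarrow> measure lborel (cball (x::'a::euclidean_space) r) = measure lborel (ball (0::'a) 1) * r ^ DIM('a)"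
  using content_cball_conv_ball[of x r] content_ball_conv_unit_ball[of r x] by simp

definition thr :: "real \<Rightarrow> real \<Rightarrow> real \<Rightarrow> nat \<Rightarrow> real \<Rightarrow> real" where
  "thr V \<Lambda> p N e = (e/2) * (e/(2*V*\<Lambda>^N)) powr (p-1)"

lemma thr_pos: "V > 0 \<Longrightarrow> \<Lambda> > 0 \<Longrightarrow> e > 0 \<Longrightarrow> thr V \<Lambda> p N e > 0"
  by (simp add: thr_def)

lemma LJ_small:
  fixes g :: "'a::euclidean_space \<Rightarrow> 'a"
  assumes wg: "weak_gradient \<phi> g" and hint: "integrable lborel (\<lambda>z. norm (g z) powr p)" and p: "p > 1"
    and K: "compact K" "K \<subseteq> cball x (\<Lambda>*r)" and r: "r > 0" and \<Lambda>: "\<Lambda> > 0" and e: "e > 0"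
    and EE: "(\<integral>z. norm (g z) powr p * indicator K z \<partial>lborel) \<le> thr (measure lborel (ball (0::'a) 1)) \<Lambda> p DIM('a) e"
  shows "LJ g K \<le> e * r powr (real DIM('a) - real DIM('a)/p)"
proof -
  define V where "V = measure lborel (ball (0::'a) 1)"
  define N where "N = DIM('a)"
  have V: "V > 0" unfolding V_def using content_ball_pos[of 1 "0::'a"] by simp
  have "measure lborel K \<le> measure lborel (cball x (\<Lambda>*r))"
    by (rule measure_mono_fmeasurable[OF K(2)]) (use K in \<open>auto simp: fmeasurable_compact compact_imp_closed borel_closed\<close>)
  also have "\<dots> = V * (\<Lambda>*r)^N" unfolding V_def N_def using \<Lambda> r by (simp add: measure_cball_eq)
  finally have meas: "measure lborel K \<le> V * (\<Lambda>*r)^N" .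
  have EE0: "(\<integral>z. norm (g z) powr p * indicator K z \<partial>lborel) \<ge> 0"
    by (rule integral_nonneg_AE) (simp add: indicator_def)
  define lam where "lam = (e/(2*V*\<Lambda>^N)) * r powr (-(N/p))"
  have lam: "lam > 0" unfolding lam_def using e V \<Lambda> r by simp
  have J: "LJ g K \<le> lam powr (1-p) * (\<integral>z. norm (g z) powr p * indicator K z \<partial>lborel) + lam * measure lborel K"
    by (rule lambda_bound[OF wg K(1) lam _ hint]) (use p in simp)
  have "LJ g K \<le> e * r powr (real N - real N/p)"
    by (rule scale_real[OF r V \<Lambda> e p EE0 _ meas J[unfolded lam_def]])
       (use EE in \<open>simp add: thr_def V_def N_def\<close>)
  then show ?thesis unfolding N_def .
qed


lemma LJ_regimes:
  fixes g :: "'a::euclidean_space \<Rightarrow> 'a"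
  assumes wg: "weak_gradient \<phi> g" and hint: "integrable lborel (\<lambda>z. norm (g z) powr p)" and p: "p > 1"
    and \<Lambda>: "\<Lambda> > 0" and e: "e > 0"
  shows "\<exists>\<delta>>0. \<exists>M. \<forall>x r. r > 0 \<longrightarrow> (r < \<delta> \<or> r > 1/\<delta> \<or> norm x > M) \<longrightarrow>
            LJ g (cball x (\<Lambda>*r)) \<le> e * r powr (real DIM('a) - real DIM('a)/p)"
proof -
  define N where "N = DIM('a)"
  define h where "h = (\<lambda>z. norm (g z) powr p)"
  define V where "V = measure lborel (ball (0::'a) 1)"
  define \<beta> where "\<beta> = real N - real N/p"
  have V: "V > 0" unfolding V_def using content_ball_pos[of 1 "0::'a"] by simp
  have N1: "N \<ge> 1" unfolding N_def by (simp add: DIM_positive Suc_leI)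
  have \<beta>: "\<beta> > 0" unfolding \<beta>_def using p N1 by (simp add: field_simps)
  have hnn: "\<And>z. h z \<ge> 0" unfolding h_def by simp
  have hint': "integrable lborel h" unfolding h_def by (rule hint)
  have [measurable]: "g \<in> borel_measurable lborel" by (rule wg_meas[OF wg])
  have hm[measurable]: "h \<in> borel_measurable lborel" unfolding h_def by measurable
  define EE where "EE = (\<lambda>S. \<integral>z. h z * indicator S z \<partial>lborel)"
  have EEmono: "EE S \<le> EE S'" if "S \<subseteq> S'" "S \<in> sets lborel" "S' \<in> sets lborel" for S S'
    unfolding EE_def using that
    by (intro integral_mono integrable_real_mult_indicator hint') (auto simp: indicator_def hnn)
  define th1 where "th1 = thr V \<Lambda> p N e"
  define th2 where "th2 = thr V \<Lambda> p N (e/2)"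
  have th1: "th1 > 0" unfolding th1_def using V \<Lambda> e by (rule thr_pos) 
  have th2: "th2 > 0" unfolding th2_def using V \<Lambda> e by (intro thr_pos) auto
  define Ah where "Ah = (\<lambda>t. {z::'a. t \<le> h z})"
  define As where "As = (\<lambda>t. {z::'a. t \<le> norm z})"
  have Ahs: "Ah t \<in> sets lborel" for t unfolding Ah_def by measurable
  have Ass: "As t \<in> sets lborel" for t unfolding As_def sets_lborel
    by (intro borel_closed closed_Collect_le continuous_intros)
  have "\<exists>T. \<forall>t\<ge>T. (\<integral>z. h z * indicator (Ah t) z \<partial>lborel) < th1/2"
  proof (rule tail_small_real[OF hint' hnn Ahs])
    show "Ah t \<subseteq> Ah s" if "s \<le> t" for s t using that unfolding Ah_def by auto
    show "h z = 0 \<or> (\<exists>t. z \<notin> Ah t)" for z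
    proof -
      have "z \<notin> Ah (h z + 1)" unfolding Ah_def by simp
      then show ?thesis by blast
    qed
  qed (use th1 in auto)
  then obtain Th where Th: "\<And>t. t \<ge> Th \<Longrightarrow> EE (Ah t) < th1/2" unfolding EE_def by blast
  have "\<exists>T. \<forall>t\<ge>T. (\<integral>z. h z * indicator (As t) z \<partial>lborel) < th1"
  proof (rule tail_small_real[OF hint' hnn Ass])
    show "As t \<subseteq> As s" if "s \<le> t" for s t using that unfolding As_def by auto
    show "h z = 0 \<or> (\<exists>t. z \<notin> As t)" for z
    proof -
      have "z \<notin> As (norm z + 1)" unfolding As_def by simp
      then show ?thesis by blast
    qed
  qed (use th1 in auto)
  then obtain T3 where T3: "\<And>t. t \<ge> T3 \<Longrightarrow> EE (As t) < th1" unfolding EE_def by blast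
  have "\<exists>T. \<forall>t\<ge>T. (\<integral>z. h z * indicator (As t) z \<partial>lborel) < th2"
  proof (rule tail_small_real[OF hint' hnn Ass])
    show "As t \<subseteq> As s" if "s \<le> t" for s t using that unfolding As_def by auto
    show "h z = 0 \<or> (\<exists>t. z \<notin> As t)" for z
    proof -
      have "z \<notin> As (norm z + 1)" unfolding As_def by simp
      then show ?thesis by blast
    qed
  qed (use th2 in auto)
  then obtain R0 where R0: "\<And>t. t \<ge> R0 \<Longrightarrow> EE (As t) < th2" unfolding EE_def by blast
  define Th' where "Th' = max Th 1"
  define R0' where "R0' = max R0 0"
  define C1 where "C1 = LJ g (cball (0::'a) R0')"
  have C1: "C1 \<ge> 0" unfolding C1_def by (rule LJ_nonneg)
  define D where "D = th1 / (2 * Th' * V)"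
  have D: "D > 0" unfolding D_def Th'_def using th1 V by simp
  define \<delta>1 where "\<delta>1 = D powr (1/N) / \<Lambda>"
  have \<delta>1: "\<delta>1 > 0" unfolding \<delta>1_def using D \<Lambda> by simp
  have \<Lambda>\<delta>1: "(\<Lambda> * \<delta>1) ^ N = D"
  proof -
    have "(\<Lambda> * \<delta>1) = D powr (1/N)" unfolding \<delta>1_def using \<Lambda> by simp
    then have "(\<Lambda> * \<delta>1) ^ N = (D powr (1/N)) powr (real N)" using D by (simp add: powr_realpow)
    also have "\<dots> = D" using D N1 by (simp add: powr_powr)
    finally show ?thesis .
  qed
  define R1 where "R1 = (2 * C1 / e + 1) powr (1/\<beta>)"
  have pos1: "2 * C1 / e + 1 > 0" using C1 e by (simp add: add_nonneg_pos)
  have R1: "R1 > 0" unfolding R1_def using pos1 by simp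
  have R1b: "R1 powr \<beta> = 2 * C1 / e + 1" unfolding R1_def using pos1 \<beta> by (simp add: powr_powr)
  define \<delta> where "\<delta> = min \<delta>1 (1 / max R1 1)"
  have \<delta>: "\<delta> > 0" "\<delta> \<le> \<delta>1" "1/\<delta> \<ge> R1"
  proof -
    show "\<delta> > 0" unfolding \<delta>_def using \<delta>1 by simp
    show "\<delta> \<le> \<delta>1" unfolding \<delta>_def by simp
    have "\<delta> \<le> 1 / max R1 1" unfolding \<delta>_def by simp
    then have "1 / (1 / max R1 1) \<le> 1/\<delta>" using \<open>\<delta> > 0\<close> by (intro divide_left_mono) auto
    then show "1/\<delta> \<ge> R1" by simp
  qed
  define M where "M = T3 + \<Lambda>/\<delta>"
  have LJs: "LJ g K \<le> e' * r powr \<beta>" if "compact K" "K \<subseteq> cball x (\<Lambda>*r)" "r > 0" "e' > 0"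
      "EE K \<le> thr V \<Lambda> p N e'" for K x r e'
    unfolding \<beta>_def N_def
    by (rule LJ_small[OF wg hint p that(1,2,3) \<Lambda> that(4)]) (use that(5) in \<open>simp add: EE_def h_def V_def N_def\<close>)
  have "\<forall>x r. r > 0 \<longrightarrow> (r < \<delta> \<or> r > 1/\<delta> \<or> norm x > M) \<longrightarrow> LJ g (cball x (\<Lambda>*r)) \<le> e * r powr \<beta>"
  proof (intro allI impI)
    fix x :: 'a and r :: real
    assume r: "r > 0" and reg: "r < \<delta> \<or> r > 1/\<delta> \<or> norm x > M"
    define K where "K = cball x (\<Lambda>*r)"
    have Kc: "compact K" unfolding K_def by simp
    have Ks: "K \<in> sets lborel" unfolding K_def by simp
    have Kf: "emeasure lborel K < \<infinity>" using Kc by (rule emeasure_compact_finite)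
    have mK: "measure lborel K = V * (\<Lambda>*r)^N" unfolding K_def V_def N_def using \<Lambda> r
      by (simp add: measure_cball_eq mult.commute)
    consider "r < \<delta>" | "r > 1/\<delta>" | "r \<le> 1/\<delta>" "norm x > M" using reg by linarith
    then show "LJ g (cball x (\<Lambda>*r)) \<le> e * r powr \<beta>"
    proof cases
      case 1
      have "EE K \<le> (\<integral>z. Th' * indicator K z + h z * indicator (Ah Th') z \<partial>lborel)"
        unfolding EE_def
      proof (rule integral_mono)
        show "integrable lborel (\<lambda>z. h z * indicator K z)" by (rule integrable_real_mult_indicator[OF Ks hint'])
        show "integrable lborel (\<lambda>z. Th' * indicator K z + h z * indicator (Ah Th') z)"
          using Kf by (intro Bochner_Integration.integrable_add integrable_mult_right integrable_real_indicator
              integrable_real_mult_indicator[OF Ahs hint'] Ks) auto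
        fix z show "h z * indicator K z \<le> Th' * indicator K z + h z * indicator (Ah Th') z"
          using hnn[of z] unfolding Ah_def by (auto simp: indicator_def Th'_def)
      qed
      also have "\<dots> = Th' * measure lborel K + EE (Ah Th')"
        unfolding EE_def using Kf
        by (subst Bochner_Integration.integral_add) (auto intro!: integrable_mult_right integrable_real_indicator integrable_real_mult_indicator[OF Ahs hint'] Ks)
      also have "\<dots> \<le> th1/2 + th1/2"
      proof (rule add_mono)
        have "(\<Lambda>*r)^N \<le> (\<Lambda>*\<delta>1)^N" using r \<Lambda> 1 \<delta> by (intro power_mono mult_left_mono) auto
        then have "measure lborel K \<le> V * D" unfolding mK \<Lambda>\<delta>1 using V by simp
        then have "Th' * measure lborel K \<le> Th' * (V * D)" unfolding Th'_def by (intro mult_left_mono) auto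
        also have "Th' * (V * D) = th1/2" unfolding D_def Th'_def using V by simp
        finally show "Th' * measure lborel K \<le> th1/2" .
        show "EE (Ah Th') \<le> th1/2" using Th[of Th'] unfolding Th'_def by simp
      qed
      finally have "EE K \<le> thr V \<Lambda> p N e" unfolding th1_def by simp
      moreover have "K \<subseteq> cball x (\<Lambda>*r)" unfolding K_def by simp
      ultimately have "LJ g K \<le> e * r powr \<beta>" using LJs[of K x r e] Kc r e by blast
      then show ?thesis unfolding K_def .
    next
      case 2
      define A where "A = As R0'"
      have Ac: "closed A" unfolding A_def As_def by (intro closed_Collect_le continuous_intros)
      have KAc: "compact (K \<inter> A)" using Kc Ac by (rule compact_Int_closed)
      have "LJ g K \<le> LJ g (K \<inter> A) + C1"
        unfolding LJ_def C1_def
      proof (subst Bochner_Integration.integral_add[symmetric])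
        show "integrable lborel (\<lambda>z. indicator (K \<inter> A) z * norm (g z))" by (rule integrable_normg[OF wg KAc])
        show "integrable lborel (\<lambda>z. indicator (cball 0 R0') z * norm (g z))" by (rule integrable_normg[OF wg]) simp
        show "(\<integral>z. indicator K z * norm (g z) \<partial>lborel) \<le> (\<integral>z. indicator (K \<inter> A) z * norm (g z) + indicator (cball 0 R0') z * norm (g z) \<partial>lborel)"
        proof (rule integral_mono)
          show "integrable lborel (\<lambda>z. indicator K z * norm (g z))" by (rule integrable_normg[OF wg Kc])
          show "integrable lborel (\<lambda>z. indicator (K \<inter> A) z * norm (g z) + indicator (cball 0 R0') z * norm (g z))"
            by (intro Bochner_Integration.integrable_add integrable_normg[OF wg KAc] integrable_normg[OF wg]) simp
          fix z show "indicator K z * norm (g z) \<le> indicator (K \<inter> A) z * norm (g z) + indicator (cball 0 R0') z * norm (g z)"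
            unfolding A_def As_def by (auto simp: indicator_def)
        qed
      qed
      moreover have "LJ g (K \<inter> A) \<le> (e/2) * r powr \<beta>"
      proof (rule LJs[OF KAc _ r])
        show "K \<inter> A \<subseteq> cball x (\<Lambda> * r)" unfolding K_def by auto
        have "EE (K \<inter> A) \<le> EE A" using Ac Ks by (intro EEmono) (auto simp: borel_closed)
        also have "EE A < th2" unfolding A_def R0'_def by (rule R0) simp
        finally show "EE (K \<inter> A) \<le> thr V \<Lambda> p N (e/2)" unfolding th2_def by simp
      qed (use e in simp)
      moreover have "C1 \<le> (e/2) * r powr \<beta>"
      proof -
        have "R1 < r" using 2 \<delta> by simp
        then have "R1 powr \<beta> < r powr \<beta>" using R1 \<beta> by (intro powr_less_mono2) auto
        then have "2 * C1 / e + 1 < r powr \<beta>" using R1b by simp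
        then have "2 * C1 / e < r powr \<beta>" by simp
        then have "2 * C1 < e * r powr \<beta>" using e by (simp add: field_simps)
        then show ?thesis by simp
      qed
      ultimately show ?thesis unfolding K_def by simp
    next
      case 3
      have sub: "K \<subseteq> As T3"
      proof
        fix z assume "z \<in> K"
        then have "dist x z \<le> \<Lambda> * r" unfolding K_def by simp
        moreover have "\<Lambda> * r \<le> \<Lambda> / \<delta>" using 3 \<Lambda> by (simp add: divide_inverse mult_left_mono)
        moreover have "norm x \<le> norm z + dist x z" by (metis dist_norm norm_triangle_sub norm_minus_commute)
        ultimately show "z \<in> As T3" unfolding As_def using 3 unfolding M_def by simp
      qed
      have "EE K \<le> EE (As T3)" by (rule EEmono[OF sub Ks Ass])
      also have "\<dots> < th1" by (rule T3) simp
      finally have "EE K \<le> thr V \<Lambda> p N e" unfolding th1_def by simp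
      moreover have "K \<subseteq> cball x (\<Lambda>*r)" unfolding K_def by simp
      ultimately have "LJ g K \<le> e * r powr \<beta>" using LJs[of K x r e] Kc r e by blast
      then show ?thesis unfolding K_def .
    qed
  qed
  then show ?thesis using \<delta>(1) unfolding \<beta>_def N_def by blast
qed


lemma sobolev_key:
  fixes \<phi> :: "'a::euclidean_space \<Rightarrow> real"
  assumes cont: "continuous_on UNIV \<phi>" and hf: "holder_finite \<alpha> \<phi>"
    and \<alpha>def: "\<alpha> = 1 - real DIM('a)/p" and \<alpha>: "\<alpha> > 0" and p: "p > 1"
    and wg: "weak_gradient \<phi> g" and hint: "integrable lborel (\<lambda>z. norm (g z) powr p)" and e: "e > 0"
  shows "\<exists>\<delta>>0. \<exists>M. \<forall>x y. x \<noteq> y \<longrightarrow> (dist x y < \<delta> \<or> dist x y > 1/\<delta> \<or> norm x > M) \<longrightarrow>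
           holder_quot \<alpha> \<phi> x y \<le> holder_seminorm \<alpha> \<phi> / 2 + e"
proof -
  define N where "N = DIM('a)"
  have N1: "N \<ge> 1" unfolding N_def by (simp add: DIM_positive Suc_leI)
  define L where "L = holder_seminorm \<alpha> \<phi>"
  have L0: "L \<ge> 0" unfolding L_def by (rule holder_seminorm_nonneg[OF hf])
  have hb: "\<And>a b. \<bar>\<phi> a - \<phi> b\<bar> \<le> L * norm (a - b) powr \<alpha>" unfolding L_def by (rule holder_bound[OF hf \<alpha>])
  define \<eta> where "\<eta> = ((1/4) powr (1/\<alpha>)) / N"
  have \<eta>: "\<eta> > 0" unfolding \<eta>_def using N1 by simp
  have N\<eta>: "(N * \<eta>) powr \<alpha> = 1/4" unfolding \<eta>_def using N1 \<alpha> by (simp add: powr_powr)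
  define \<Lambda> where "\<Lambda> = real N + 1 + N * \<eta>"
  have \<Lambda>: "\<Lambda> > 0" unfolding \<Lambda>_def using \<eta> by (simp add: add_pos_nonneg)
  define V where "V = measure lborel (ball (0::'a) 1)"
  have V: "V > 0" unfolding V_def using content_ball_pos[of 1 "0::'a"] by simp
  define m0 where "m0 = (exp (-2) * exp (-2::real)) ^ N"
  have m0: "m0 > 0" unfolding m0_def by simp
  define K0 where "K0 = m0 * (\<eta>/2)^N * V"
  have K0: "K0 > 0" unfolding K0_def using m0 \<eta> V by simp
  define e' where "e' = e * K0 / N"
  have e': "e' > 0" unfolding e'_def using e K0 N1 by simp
  obtain \<delta> M where \<delta>: "\<delta> > 0" and reg: "\<And>x r. r > 0 \<Longrightarrow> (r < \<delta> \<or> r > 1/\<delta> \<or> norm x > M) \<Longrightarrow>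
      LJ g (cball x (\<Lambda>*r)) \<le> e' * r powr (real DIM('a) - real DIM('a)/p)"
    using LJ_regimes[OF wg hint p \<Lambda> e'] by blast
  have "\<forall>x y. x \<noteq> y \<longrightarrow> (dist x y < \<delta> \<or> dist x y > 1/\<delta> \<or> norm x > M) \<longrightarrow>
           holder_quot \<alpha> \<phi> x y \<le> L / 2 + e"
  proof (intro allI impI)
    fix x y :: 'a assume xy: "x \<noteq> y" and rg: "dist x y < \<delta> \<or> dist x y > 1/\<delta> \<or> norm x > M"
    define r where "r = dist x y"
    have r: "r > 0" using xy unfolding r_def by simp
    have nr: "norm (y - x) = r" unfolding r_def by (simp add: dist_norm norm_minus_commute)
    have ra: "r powr \<alpha> > 0" using r by simp
    define \<epsilon> where "\<epsilon> = \<eta> * r"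
    have \<epsilon>: "\<epsilon> > 0" unfolding \<epsilon>_def using \<eta> r by simp
    have me: "\<bar>\<phi> x - \<phi> y\<bar> \<le> 2 * L * (real N * \<epsilon>) powr \<alpha> +
     real N * norm (y - x) * LJ g (cball x ((real N + 1) * norm (y - x) + real N * \<epsilon>)) /
       ((exp (-2) * exp (-2)) ^ N * measure lborel (ball (0::'a) (\<epsilon>/2)))"
      unfolding N_def by (rule main_estimate[OF \<epsilon> cont wg hb L0 \<alpha>])
    have rad: "(real N + 1) * r + real N * \<epsilon> = \<Lambda> * r"
      unfolding \<epsilon>_def \<Lambda>_def by (simp add: algebra_simps)
    have LJb: "LJ g (cball x (\<Lambda>*r)) \<le> e' * r powr (real N - real N/p)"
      using reg[OF r, of x] rg unfolding r_def N_def by blast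
    have mb: "measure lborel (ball (0::'a) (\<epsilon>/2)) = (\<eta>/2)^N * r^N * V"
      unfolding V_def N_def \<epsilon>_def using content_ball_conv_unit_ball[of "\<eta>*r/2" "0::'a"] \<eta> r
      by (simp add: power_mult_distrib field_simps)
    have den: "(exp (-2) * exp (-2)) ^ N * measure lborel (ball (0::'a) (\<epsilon>/2)) = K0 * r^N"
      unfolding mb K0_def m0_def by (simp add: algebra_simps)
    have rN: "r^N > 0" using r by simp
    have t2: "real N * norm (y - x) * LJ g (cball x ((real N + 1) * norm (y - x) + real N * \<epsilon>)) /
       ((exp (-2) * exp (-2)) ^ N * measure lborel (ball (0::'a) (\<epsilon>/2))) \<le> e * r powr \<alpha>"
    proof -
      have "real N * norm (y - x) * LJ g (cball x ((real N + 1) * norm (y - x) + real N * \<epsilon>)) /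
         ((exp (-2) * exp (-2)) ^ N * measure lborel (ball (0::'a) (\<epsilon>/2)))
         = real N * r * LJ g (cball x (\<Lambda>*r)) / (K0 * r^N)" by (simp only: nr rad den)
      also have "\<dots> \<le> real N * r * (e' * r powr (real N - real N/p)) / (K0 * r^N)"
        using LJb r K0 rN by (intro divide_right_mono mult_left_mono) auto
      also have "\<dots> = e * (r * r powr (real N - real N/p) / r^N)"
        unfolding e'_def using K0 N1 rN by (simp add: field_simps)
      also have "r * r powr (real N - real N/p) / r^N = r powr \<alpha>"
      proof -
        have "r * r powr (real N - real N/p) = r powr (1 + (real N - real N/p))"
          using r by (simp add: powr_add)
        also have "1 + (real N - real N/p) = \<alpha> + real N" unfolding \<alpha>def N_def[symmetric] by simp
        also have "r powr (\<alpha> + real N) = r powr \<alpha> * r powr (real N)" by (rule powr_add)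
        finally show ?thesis using r rN by (simp add: powr_realpow)
      qed
      finally show ?thesis by simp
    qed
    have t1: "2 * L * (real N * \<epsilon>) powr \<alpha> = L/2 * r powr \<alpha>"
    proof -
      have "(real N * \<epsilon>) powr \<alpha> = (real N * \<eta>) powr \<alpha> * r powr \<alpha>"
        unfolding \<epsilon>_def using \<eta> r by (simp add: powr_mult[symmetric] mult.assoc)
      then show ?thesis using N\<eta> by simp
    qed
    have "\<bar>\<phi> x - \<phi> y\<bar> \<le> L/2 * r powr \<alpha> + e * r powr \<alpha>" using me t1 t2 by linarith
    then have "\<bar>\<phi> x - \<phi> y\<bar> \<le> (L/2 + e) * r powr \<alpha>" by (simp add: distrib_right)
    then show "holder_quot \<alpha> \<phi> x y \<le> L / 2 + e"
      unfolding holder_quot_def using ra by (simp add: dist_norm r_def divide_le_eq)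
  qed
  then show ?thesis using \<delta> unfolding L_def by blast
qed


definition gag :: "real \<Rightarrow> real \<Rightarrow> ('a::euclidean_space \<Rightarrow> real) \<Rightarrow> 'a \<times> 'a \<Rightarrow> ennreal" where
  "gag p q \<phi> zw = ennreal (\<bar>\<phi> (fst zw) - \<phi> (snd zw)\<bar> powr p / norm (fst zw - snd zw) powr q)"

lemma sets_P2: "sets (lborel \<Otimes>\<^sub>M lborel) = sets (borel :: ('a::euclidean_space \<times> 'a) measure)"
  by (metis lborel_prod sets_lborel)

lemma closed_sets_P2: "closed (A :: ('a::euclidean_space \<times> 'a) set) \<Longrightarrow> A \<in> sets (lborel \<Otimes>\<^sub>M lborel)"
  unfolding sets_P2 by (rule borel_closed)

lemma gag_measurable:
  assumes "continuous_on UNIV \<phi>"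
  shows "gag p q \<phi> \<in> borel_measurable (lborel \<Otimes>\<^sub>M lborel)"
proof -
  have "\<phi> \<in> borel_measurable borel" using assms by (rule borel_measurable_continuous_onI)
  then have [measurable]: "\<phi> \<in> borel_measurable lborel" by simp
  show ?thesis unfolding gag_def by measurable
qed

lemma ball_content: "r \<ge> 0 \<Longrightarrow> emeasure lborel (ball (x::'a::euclidean_space) r) = ennreal (r ^ DIM('a) * measure lborel (ball (0::'a) 1))"
  using emeasure_eq_ennreal_measure[of lborel "ball x r"] emeasure_lborel_ball_finite[of x r]
    content_ball_conv_unit_ball[of r x] by simp

lemma lower_bound:
  fixes \<phi> :: "'a::euclidean_space \<Rightarrow> real"
  assumes hb: "\<And>a b. \<bar>\<phi> a - \<phi> b\<bar> \<le> L * norm (a - b) powr \<alpha>" and L: "L \<ge> 0" and \<alpha>: "\<alpha> > 0"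
    and p: "p > 0" and q: "q > 0"
    and \<eta>: "0 < \<eta>" "\<eta> \<le> 1/4" and xy: "x \<noteq> y"
    and D: "\<bar>\<phi> x - \<phi> y\<bar> - 2 * L * (\<eta> * dist x y) powr \<alpha> \<ge> d" "d > 0"
  shows "ennreal (d powr p / ((1+2*\<eta>) * dist x y) powr q * (((\<eta> * dist x y)^DIM('a) * measure lborel (ball (0::'a) 1)) * ((\<eta> * dist x y)^DIM('a) * measure lborel (ball (0::'a) 1))))
     \<le> (\<integral>\<^sup>+zw. gag p q \<phi> zw * indicator (ball x (\<eta> * dist x y) \<times> ball y (\<eta> * dist x y)) zw \<partial>(lborel \<Otimes>\<^sub>M lborel))"
proof -
  define r where "r = dist x y"
  define \<rho> where "\<rho> = \<eta> * r"
  have r: "r > 0" using xy by (simp add: r_def)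
  have \<rho>: "\<rho> > 0" "\<rho> \<le> r/4" using r \<eta> by (auto simp: \<rho>_def)
  define c where "c = d powr p / ((1+2*\<eta>) * r) powr q"
  have c: "c \<ge> 0" unfolding c_def using r \<eta> by simp
  have pt: "ennreal c \<le> gag p q \<phi> zw" if zw: "zw \<in> ball x \<rho> \<times> ball y \<rho>" for zw
  proof -
    obtain z w where zw': "zw = (z,w)" by (cases zw)
    have dz: "dist x z < \<rho>" and dw: "dist y w < \<rho>" using zw zw' by auto
    have "\<bar>\<phi> x - \<phi> z\<bar> \<le> L * \<rho> powr \<alpha>"
    proof -
      have "norm (x - z) powr \<alpha> \<le> \<rho> powr \<alpha>" using dz \<alpha> by (intro powr_mono2) (auto simp: dist_norm)
      then show ?thesis using hb[of x z] L by (meson mult_left_mono order_trans)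
    qed
    moreover have "\<bar>\<phi> y - \<phi> w\<bar> \<le> L * \<rho> powr \<alpha>"
    proof -
      have "norm (y - w) powr \<alpha> \<le> \<rho> powr \<alpha>" using dw \<alpha> by (intro powr_mono2) (auto simp: dist_norm)
      then show ?thesis using hb[of y w] L by (meson mult_left_mono order_trans)
    qed
    ultimately have "\<bar>\<phi> z - \<phi> w\<bar> \<ge> d" using D(1) unfolding \<rho>_def r_def by linarith
    then have A: "d powr p \<le> \<bar>\<phi> z - \<phi> w\<bar> powr p" using D(2) p by (intro powr_mono2) auto
    have "dist z w \<le> dist z x + dist x w" "dist x w \<le> dist x y + dist y w" by (rule dist_triangle)+
    then have "dist z w \<le> dist z x + dist x y + dist y w" by linarith
    moreover have "dist z x = dist x z" by (rule dist_commute)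
    ultimately have "dist z w \<le> (1 + 2*\<eta>) * r" using dz dw unfolding \<rho>_def r_def
      by (simp add: algebra_simps)
    then have n1: "norm (z - w) \<le> (1 + 2*\<eta>) * r" by (simp add: dist_norm)
    have "dist x y \<le> dist x z + dist z y" "dist z y \<le> dist z w + dist w y" by (rule dist_triangle)+
    then have "dist x y \<le> dist x z + dist z w + dist w y" by linarith
    moreover have "dist w y = dist y w" by (rule dist_commute)
    ultimately have "dist z w > 0" using dz dw \<rho> unfolding r_def by linarith
    then have n2: "norm (z - w) > 0" by (simp add: dist_norm)
    have B: "norm (z - w) powr q \<le> ((1 + 2*\<eta>) * r) powr q" using n1 n2 q by (intro powr_mono2) auto
    have "c \<le> \<bar>\<phi> z - \<phi> w\<bar> powr p / norm (z - w) powr q"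
      unfolding c_def by (rule frac_le) (use A B n2 D(2) in auto)
    then show ?thesis unfolding gag_def zw' by (simp add: ennreal_leI)
  qed
  have "(\<integral>\<^sup>+zw. ennreal c * indicator (ball x \<rho> \<times> ball y \<rho>) zw \<partial>(lborel \<Otimes>\<^sub>M lborel))
        \<le> (\<integral>\<^sup>+zw. gag p q \<phi> zw * indicator (ball x \<rho> \<times> ball y \<rho>) zw \<partial>(lborel \<Otimes>\<^sub>M lborel))"
    by (intro nn_integral_mono) (auto simp: indicator_def pt)
  moreover have "(\<integral>\<^sup>+zw. ennreal c * indicator (ball x \<rho> \<times> ball y \<rho>) zw \<partial>(lborel \<Otimes>\<^sub>M lborel))
      = ennreal c * (emeasure lborel (ball x \<rho>) * emeasure lborel (ball y \<rho>))"
    by (subst nn_integral_cmult_indicator) (auto simp: lborel.emeasure_pair_measure_Times)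
  moreover have "ennreal c * (emeasure lborel (ball x \<rho>) * emeasure lborel (ball y \<rho>)) =
     ennreal (c * ((\<rho>^DIM('a) * measure lborel (ball (0::'a) 1)) * (\<rho>^DIM('a) * measure lborel (ball (0::'a) 1))))"
    using \<rho> c by (simp add: ball_content ennreal_mult'[symmetric] ennreal_mult[symmetric])
  ultimately show ?thesis unfolding c_def \<rho>_def r_def by simp
qed


lemma ball_pair_dist:
  assumes "z \<in> ball x \<rho>" "w \<in> ball y \<rho>"
  shows "dist x y - 2*\<rho> \<le> dist z w" "dist z w \<le> dist x y + 2*\<rho>"
proof -
  have dz: "dist x z < \<rho>" and dw: "dist y w < \<rho>" using assms by auto
  have "dist z w \<le> dist z x + dist x w" "dist x w \<le> dist x y + dist y w" by (rule dist_triangle)+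
  moreover have "dist z x = dist x z" by (rule dist_commute)
  ultimately show "dist z w \<le> dist x y + 2*\<rho>" using dz dw by linarith
  have "dist x y \<le> dist x z + dist z y" "dist z y \<le> dist z w + dist w y" by (rule dist_triangle)+
  moreover have "dist w y = dist y w" by (rule dist_commute)
  ultimately show "dist x y - 2*\<rho> \<le> dist z w" using dz dw by linarith
qed

lemma ball_norm: "z \<in> ball x \<rho> \<Longrightarrow> norm x - \<rho> \<le> norm z"
proof -
  assume "z \<in> ball x \<rho>"
  then have "norm (x - z) < \<rho>" by (simp add: dist_norm)
  moreover have "norm x \<le> norm z + norm (x - z)" using norm_triangle_ineq[of z "x - z"] by simp
  ultimately show ?thesis by linarith
qed

lemma scale_identity:
  fixes e r \<eta> V \<alpha> p q :: real and N :: nat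
  assumes "e > 0" "r > 0" "\<eta> > 0" "p > 0" "\<alpha> * p + 2 * real N = q"
  shows "(e * r powr \<alpha>) powr p / ((1+2*\<eta>) * r) powr q * (((\<eta>*r)^N * V) * ((\<eta>*r)^N * V))
       = e powr p / (1+2*\<eta>) powr q * ((\<eta>^N * V) * (\<eta>^N * V))"
proof -
  have r1: "(e * r powr \<alpha>) powr p = e powr p * r powr (\<alpha> * p)"
    using assms by (simp add: powr_mult powr_powr)
  have r2: "((1+2*\<eta>) * r) powr q = (1+2*\<eta>) powr q * r powr q"
    using assms by (simp add: powr_mult)
  have r3: "r powr q = r powr (\<alpha> * p) * (r^N * r^N)"
  proof -
    have "r powr q = r powr (\<alpha> * p + real N + real N)"
      using assms(5) by (simp add: algebra_simps)
    then have "r powr q = r powr (\<alpha> * p) * r powr (real N) * r powr (real N)"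
      by (simp only: powr_add)
    then show ?thesis using assms(2) by (simp add: powr_realpow)
  qed
  have pos: "r powr (\<alpha> * p) > 0" "(1+2*\<eta>) powr q > 0" "r^N > 0" using assms by auto
  show ?thesis unfolding r1 r2 r3 using pos
    by (simp add: power_mult_distrib field_simps)
qed

lemma frac_key:
  fixes \<phi> :: "'a::euclidean_space \<Rightarrow> real"
  assumes cont: "continuous_on UNIV \<phi>" and hf: "holder_finite \<alpha> \<phi>" and \<alpha>: "\<alpha> > 0" and p: "p > 0"
    and q: "q > 0" and qa: "\<alpha> * p + 2 * real DIM('a) = q"
    and fin: "(\<integral>\<^sup>+zw. gag p q \<phi> zw \<partial>(lborel \<Otimes>\<^sub>M lborel)) < \<infinity>"
    and e: "e > 0"
  shows "\<exists>\<delta>>0. \<exists>M. \<forall>x y. x \<noteq> y \<longrightarrow> (dist x y < \<delta> \<or> dist x y > 1/\<delta> \<or> norm x > M) \<longrightarrow>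
           holder_quot \<alpha> \<phi> x y \<le> holder_seminorm \<alpha> \<phi> / 2 + e"
proof -
  define L where "L = holder_seminorm \<alpha> \<phi>"
  have L0: "L \<ge> 0" unfolding L_def by (rule holder_seminorm_nonneg[OF hf])
  have hb: "\<And>a b. \<bar>\<phi> a - \<phi> b\<bar> \<le> L * norm (a - b) powr \<alpha>" unfolding L_def by (rule holder_bound[OF hf \<alpha>])
  define \<eta> where "\<eta> = min (1/4) ((1/4) powr (1/\<alpha>))"
  have \<eta>: "\<eta> > 0" "\<eta> \<le> 1/4" unfolding \<eta>_def by auto
  have \<eta>\<alpha>: "\<eta> powr \<alpha> \<le> 1/4"
  proof -
    have "\<eta> powr \<alpha> \<le> ((1/4) powr (1/\<alpha>)) powr \<alpha>" using \<eta> \<alpha> unfolding \<eta>_def by (intro powr_mono2) auto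
    also have "\<dots> = 1/4" using \<alpha> by (simp add: powr_powr)
    finally show ?thesis .
  qed
  define N where "N = DIM('a)"
  define V where "V = measure lborel (ball (0::'a) 1)"
  have V: "V > 0" unfolding V_def using content_ball_pos[of 1 "0::'a"] by simp
  define ce where "ce = e powr p / (1+2*\<eta>) powr q * ((\<eta>^N * V) * (\<eta>^N * V))"
  have ce: "ce > 0" unfolding ce_def using e \<eta> V by simp
  define P2 where "P2 = (lborel \<Otimes>\<^sub>M lborel :: ('a \<times> 'a) measure)"
  define g where "g = gag p q \<phi>"
  have gm: "g \<in> borel_measurable P2" unfolding g_def P2_def by (rule gag_measurable[OF cont])
  have gfin: "(\<integral>\<^sup>+zw. g zw \<partial>P2) < \<infinity>" using fin unfolding g_def P2_def .
  have g0: "\<And>zw. fst zw = snd zw \<Longrightarrow> g zw = 0" unfolding g_def gag_def by simp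
  define A1 where "A1 = (\<lambda>t. {zw::'a\<times>'a. dist (fst zw) (snd zw) * t \<le> 1})"
  define A2 where "A2 = (\<lambda>t. {zw::'a\<times>'a. t \<le> dist (fst zw) (snd zw)})"
  define A3 where "A3 = (\<lambda>t. {zw::'a\<times>'a. t \<le> norm (fst zw)})"
  have "\<exists>T. \<forall>t\<ge>T. (\<integral>\<^sup>+x. g x * indicator (A1 t) x \<partial>P2) < ennreal ce"
  proof (rule tail_small[OF gm gfin])
    show "A1 t \<in> sets P2" for t unfolding P2_def A1_def
      by (intro closed_sets_P2 closed_Collect_le continuous_intros)
    show "A1 t \<subseteq> A1 s" if "s \<le> t" for s t
      unfolding A1_def using that by (auto intro: order_trans[OF mult_left_mono])
    show "g x = 0 \<or> (\<exists>t. x \<notin> A1 t)" for x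
    proof (cases "fst x = snd x")
      case True then show ?thesis using g0 by simp
    next
      case False
      then have "dist (fst x) (snd x) > 0" by simp
      then have "x \<notin> A1 (2 / dist (fst x) (snd x))" unfolding A1_def by simp
      then show ?thesis by blast
    qed
  qed (use ce in simp)
  then obtain T1 where T1: "\<And>t. t \<ge> T1 \<Longrightarrow> (\<integral>\<^sup>+x. g x * indicator (A1 t) x \<partial>P2) < ennreal ce" by blast
  have "\<exists>T. \<forall>t\<ge>T. (\<integral>\<^sup>+x. g x * indicator (A2 t) x \<partial>P2) < ennreal ce"
  proof (rule tail_small[OF gm gfin])
    show "A2 t \<in> sets P2" for t unfolding P2_def A2_def
      by (intro closed_sets_P2 closed_Collect_le continuous_intros)
    show "A2 t \<subseteq> A2 s" if "s \<le> t" for s t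
      unfolding A2_def using that by auto
    show "g x = 0 \<or> (\<exists>t. x \<notin> A2 t)" for x
    proof -
      have "x \<notin> A2 (dist (fst x) (snd x) + 1)" unfolding A2_def by simp
      then show ?thesis by blast
    qed
  qed (use ce in simp)
  then obtain T2 where T2: "\<And>t. t \<ge> T2 \<Longrightarrow> (\<integral>\<^sup>+x. g x * indicator (A2 t) x \<partial>P2) < ennreal ce" by blast
  have "\<exists>T. \<forall>t\<ge>T. (\<integral>\<^sup>+x. g x * indicator (A3 t) x \<partial>P2) < ennreal ce"
  proof (rule tail_small[OF gm gfin])
    show "A3 t \<in> sets P2" for t unfolding P2_def A3_def
      by (intro closed_sets_P2 closed_Collect_le continuous_intros)
    show "A3 t \<subseteq> A3 s" if "s \<le> t" for s t
      unfolding A3_def using that by auto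
    show "g x = 0 \<or> (\<exists>t. x \<notin> A3 t)" for x
    proof -
      have "x \<notin> A3 (norm (fst x) + 1)" unfolding A3_def by simp
      then show ?thesis by blast
    qed
  qed (use ce in simp)
  then obtain T3 where T3: "\<And>t. t \<ge> T3 \<Longrightarrow> (\<integral>\<^sup>+x. g x * indicator (A3 t) x \<partial>P2) < ennreal ce" by blast
  define T1' where "T1' = max T1 1"
  define T2' where "T2' = max T2 1"
  define \<delta> where "\<delta> = min (1/(2*T1')) (1/(2*T2'))"
  have T1': "T1' \<ge> T1" "T1' \<ge> 1" and T2': "T2' \<ge> T2" "T2' \<ge> 1" unfolding T1'_def T2'_def by auto
  have \<delta>: "\<delta> > 0" "\<delta> \<le> 1/(2*T1')" "\<delta> \<le> 1/(2*T2')" unfolding \<delta>_def using T1' T2' by auto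
  define M where "M = T3 + 1/\<delta>"
  have "\<forall>x y. x \<noteq> y \<longrightarrow> (dist x y < \<delta> \<or> dist x y > 1/\<delta> \<or> norm x > M) \<longrightarrow>
           holder_quot \<alpha> \<phi> x y \<le> holder_seminorm \<alpha> \<phi> / 2 + e"
  proof (intro allI impI)
    fix x y :: 'a
    assume xy: "x \<noteq> y" and reg: "dist x y < \<delta> \<or> dist x y > 1/\<delta> \<or> norm x > M"
    show "holder_quot \<alpha> \<phi> x y \<le> holder_seminorm \<alpha> \<phi> / 2 + e"
    proof (rule ccontr)
      assume "\<not> ?thesis"
      then have Qbig: "holder_quot \<alpha> \<phi> x y > L/2 + e" unfolding L_def by simp
      define r where "r = dist x y"
      have r: "r > 0" using xy unfolding r_def by simp
      define \<rho> where "\<rho> = \<eta> * r"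
      have \<rho>: "\<rho> > 0" "\<rho> \<le> r/4" unfolding \<rho>_def using r \<eta> by auto
      define B where "B = ball x \<rho> \<times> ball y \<rho>"
      define d where "d = e * r powr \<alpha>"
      have ra: "r powr \<alpha> > 0" using r by simp
      have eqQ: "\<bar>\<phi> x - \<phi> y\<bar> = holder_quot \<alpha> \<phi> x y * r powr \<alpha>"
        unfolding holder_quot_def r_def using ra by (simp add: dist_norm r_def)
      have "2 * L * (\<eta> * r) powr \<alpha> = 2 * L * \<eta> powr \<alpha> * r powr \<alpha>"
        using \<eta> r by (simp add: powr_mult)
      also have "\<dots> \<le> 2 * L * (1/4) * r powr \<alpha>"
        using \<eta>\<alpha> L0 ra by (intro mult_right_mono mult_left_mono) auto
      finally have t1: "2 * L * (\<eta> * r) powr \<alpha> \<le> L/2 * r powr \<alpha>" by simp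
      have "holder_quot \<alpha> \<phi> x y * r powr \<alpha> \<ge> (L/2 + e) * r powr \<alpha>"
        using Qbig ra by (intro mult_right_mono) auto
      then have Dd: "\<bar>\<phi> x - \<phi> y\<bar> - 2 * L * (\<eta> * dist x y) powr \<alpha> \<ge> d"
        using eqQ t1 unfolding d_def r_def by (simp add: algebra_simps)
      have dpos: "d > 0" unfolding d_def using e ra by simp
      have lb: "ennreal (d powr p / ((1+2*\<eta>) * dist x y) powr q * (((\<eta> * dist x y)^DIM('a) * measure lborel (ball (0::'a) 1)) * ((\<eta> * dist x y)^DIM('a) * measure lborel (ball (0::'a) 1))))
         \<le> (\<integral>\<^sup>+zw. g zw * indicator B zw \<partial>P2)"
        unfolding g_def P2_def B_def \<rho>_def r_def
        by (rule lower_bound[OF hb L0 \<alpha> p q \<eta> xy Dd dpos])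
      have "d powr p / ((1+2*\<eta>) * dist x y) powr q * (((\<eta> * dist x y)^DIM('a) * measure lborel (ball (0::'a) 1)) * ((\<eta> * dist x y)^DIM('a) * measure lborel (ball (0::'a) 1))) = ce"
        unfolding d_def ce_def V_def N_def r_def[symmetric]
        by (rule scale_identity[OF e r \<eta>(1) p qa])
      with lb have lb': "ennreal ce \<le> (\<integral>\<^sup>+zw. g zw * indicator B zw \<partial>P2)" by simp
      have sub: "(\<integral>\<^sup>+zw. g zw * indicator B zw \<partial>P2) \<le> (\<integral>\<^sup>+zw. g zw * indicator A zw \<partial>P2)" if "B \<subseteq> A" for A
        using that by (intro nn_integral_mono) (auto simp: indicator_def)
      consider "r < \<delta>" | "r > 1/\<delta>" | "r \<le> 1/\<delta>" "norm x > M" using reg unfolding r_def by linarith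
      then show False
      proof cases
        case 1
        have "B \<subseteq> A1 T1'"
        proof
          fix zw assume "zw \<in> B"
          then have "dist (fst zw) (snd zw) \<le> r + 2*\<rho>" unfolding B_def r_def
            using ball_pair_dist(2)[of "fst zw" x \<rho> "snd zw" y] by (cases zw) auto
          then have "dist (fst zw) (snd zw) \<le> 2 * r" using \<rho> by linarith
          moreover have "2 * r * T1' \<le> 1"
          proof -
            have "2 * r * T1' \<le> 2 * \<delta> * T1'" using 1 T1' by simp
            also have "\<dots> \<le> 2 * (1/(2*T1')) * T1'" using \<delta> T1' by (intro mult_right_mono) auto
            finally show ?thesis using T1' by simp
          qed
          ultimately have "dist (fst zw) (snd zw) * T1' \<le> 1" using T1'
            by (meson mult_right_mono order_trans zero_le_one order_trans[OF zero_le_one])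
          then show "zw \<in> A1 T1'" unfolding A1_def by simp
        qed
        then have "(\<integral>\<^sup>+zw. g zw * indicator B zw \<partial>P2) < ennreal ce" using sub T1[OF T1'(1)] by (meson le_less_trans)
        then show False using lb' by simp
      next
        case 2
        have "B \<subseteq> A2 T2'"
        proof
          fix zw assume "zw \<in> B"
          then have "r - 2*\<rho> \<le> dist (fst zw) (snd zw)" unfolding B_def r_def
            using ball_pair_dist(1)[of "fst zw" x \<rho> "snd zw" y] by (cases zw) auto
          moreover have "T2' \<le> r/2"
          proof -
            have "1/\<delta> \<ge> 2 * T2'" using \<delta> T2' by (simp add: field_simps)
            then show ?thesis using 2 by simp
          qed
          ultimately show "zw \<in> A2 T2'" unfolding A2_def using \<rho> by simp
        qed
        then have "(\<integral>\<^sup>+zw. g zw * indicator B zw \<partial>P2) < ennreal ce" using sub T2[OF T2'(1)] by (meson le_less_trans)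
        then show False using lb' by simp
      next
        case 3
        have "B \<subseteq> A3 T3"
        proof
          fix zw assume "zw \<in> B"
          then have "norm x - \<rho> \<le> norm (fst zw)" unfolding B_def
            using ball_norm[of "fst zw" x \<rho>] by (cases zw) auto
          moreover have "\<rho> \<le> 1/\<delta>" using 3 \<rho> r by simp
          ultimately show "zw \<in> A3 T3" unfolding A3_def using 3 unfolding M_def by simp
        qed
        then have "(\<integral>\<^sup>+zw. g zw * indicator B zw \<partial>P2) < ennreal ce" using sub T3[of T3] by (meson le_less_trans order_refl)
        then show False using lb' by simp
      qed
    qed
  qed
  then show ?thesis using \<delta>(1) by blast
qed


theorem theorem5p4:
  fixes \<phi> :: "'a::euclidean_space \<Rightarrow> real" and s p :: real
  assumes "0 < s" "s \<le> 1" "1 < p" "s * p > real DIM('a)"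
    and "\<phi> \<in> calW s p"
  shows "\<exists>x0 y0. x0 \<noteq> y0 \<and>
           holder_seminorm (alpha_sp s p TYPE('a)) \<phi> = holder_quot (alpha_sp s p TYPE('a)) \<phi> x0 y0"
proof -
  define \<alpha> where "\<alpha> = alpha_sp s p TYPE('a)"
  have \<alpha>def: "\<alpha> = s - real DIM('a) / p" unfolding \<alpha>_def alpha_sp_def ..
  have p0: "p > 0" using assms(3) by simp
  have \<alpha>: "\<alpha> > 0" unfolding \<alpha>def using assms(4) p0 by (simp add: field_simps)
  have cont: "continuous_on UNIV \<phi>" and hf: "holder_finite \<alpha> \<phi>" and W: "Wsp_seminorm_finite s p \<phi>"
    using assms(5) unfolding calW_def \<alpha>_def by auto
  have key: "\<And>e. e > 0 \<Longrightarrow> \<exists>\<delta>>0. \<exists>M. \<forall>x y. x \<noteq> y \<longrightarrow>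
        (dist x y < \<delta> \<or> dist x y > 1/\<delta> \<or> norm x > M) \<longrightarrow>
        holder_quot \<alpha> \<phi> x y \<le> holder_seminorm \<alpha> \<phi> / 2 + e"
  proof (cases "s < 1")
    case True
    define q where "q = real DIM('a) + s * p"
    have q: "q > 0" unfolding q_def using assms(1) p0 by (simp add: add_pos_pos)
    have qa: "\<alpha> * p + 2 * real DIM('a) = q" unfolding \<alpha>def q_def using p0 by (simp add: field_simps)
    have fin0: "(\<integral>\<^sup>+ x. \<integral>\<^sup>+ y. ennreal (\<bar>\<phi> x - \<phi> y\<bar> powr p / norm (x - y) powr q) \<partial>lborel \<partial>lborel) < \<infinity>"
      using W True unfolding Wsp_seminorm_finite_def q_def by simp
    have eq: "(\<integral>\<^sup>+ x. \<integral>\<^sup>+ y. gag p q \<phi> (x, y) \<partial>lborel \<partial>lborel) = integral\<^sup>N (lborel \<Otimes>\<^sub>M lborel) (gag p q \<phi>)"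
      by (rule lborel.nn_integral_fst[OF gag_measurable[OF cont]])
    have e1: "(\<integral>\<^sup>+ x. \<integral>\<^sup>+ y. gag p q \<phi> (x, y) \<partial>lborel \<partial>lborel) =
        (\<integral>\<^sup>+ x. \<integral>\<^sup>+ y. ennreal (\<bar>\<phi> x - \<phi> y\<bar> powr p / norm (x - y) powr q) \<partial>lborel \<partial>lborel)"
      by (simp add: gag_def)
    have fin: "(\<integral>\<^sup>+zw. gag p q \<phi> zw \<partial>(lborel \<Otimes>\<^sub>M lborel)) < \<infinity>"
      using fin0 unfolding e1[symmetric] eq .
    show "\<And>e. e > 0 \<Longrightarrow> ?thesis e" by (rule frac_key[OF cont hf \<alpha> p0 q qa fin])
  next
    case False
    then have s1: "s = 1" using assms(2) by simp
    obtain g where wg: "weak_gradient \<phi> g" and gfin: "(\<integral>\<^sup>+ x. ennreal (norm (g x) powr p) \<partial>lborel) < \<infinity>"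
      using W False unfolding Wsp_seminorm_finite_def by auto
    have [measurable]: "g \<in> borel_measurable lborel" by (rule wg_meas[OF wg])
    have hint: "integrable lborel (\<lambda>z. norm (g z) powr p)"
    proof (rule integrableI_bounded)
      show "(\<lambda>z. norm (g z) powr p) \<in> borel_measurable lborel" by measurable
      show "(\<integral>\<^sup>+ x. ennreal (norm (norm (g x) powr p)) \<partial>lborel) < \<infinity>" using gfin by simp
    qed
    have \<alpha>1: "\<alpha> = 1 - real DIM('a) / p" using \<alpha>def s1 by simp
    show "\<And>e. e > 0 \<Longrightarrow> ?thesis e" by (rule sobolev_key[OF cont hf \<alpha>1 \<alpha> assms(3) wg hint])
  qed
  show ?thesis using attain_crit[OF cont hf key] unfolding \<alpha>_def by blast
qed


end
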